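(* Let $\mathcal H$ be a complex Hilbert space and let $T\in\mathcal B(\mathcal H)$ be weakly concave. Let $T'=T(T^*T)^{-1}$ be its Cauchy dual, and let $$\mathcal H_u:=\bigcap_{n=0}^{\infty}\mathcal R(T^n),\qquad \mathcal H'_u:=\bigcap_{n=0}^{\infty}\mathcal R(T'^n),$$ where $\mathcal R(\cdot)$ denotes the range. Then $\mathcal H'_u\subseteq\mathcal H_u$ and $\mathcal H'_u$ reduces $T$. Moreover, $T=U\oplus S$ with respect to the decomposition $\mathcal H=\mathcal H'_u\oplus(\mathcal H'_u)^{\perp}$, where $U\in\mathcal B(\mathcal H'_u)$ is unitary and $S\in\mathcal B((\mathcal H'_u)^{\perp})$ has the wandering subspace property.
   Context: $\mathcal B(\mathcal H)$ is the algebra of bounded operators on $\mathcal H$. An operator $T$ is left-invertible if $LT=I$ for some $L\in\mathcal B(\mathcal H)$ (equivalently $T^*T$ is invertible); then its Cauchy dual is $T'=T(T^*T)^{-1}$. The approximate point spectrum $\sigma_{ap}(T)$ is the set of $\lambda\in\mathbb C$ with $T-\lambda I$ not bounded below; $\mathbb D$ is the open unit disc and $\partial\mathbb D$ the unit circle. A left-invertible $T$ is weakly concave if (1) $\sigma_{ap}(T)\subseteq\partial\mathbb D$, (2) $\|x\|\le\|Tx\|$ for all $x\in\mathcal H$, and (3) $\|T'T^*x\|\le\|T'Tx\|$ for all $x\in\mathcal H$. An operator $S$ on a Hilbert space $\mathcal K$ has the wandering subspace property if $\mathcal K$ is the closed linear span of $\bigcup_{n\ge0}S^n(\ker S^* )$.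 *)

theory Defs
  imports "HOL-Analysis.Analysis"
begin

text \<open>A complex Hilbert space is modelled by its realification: a real Hilbert space
  (type class real_inner + complete_space) together with a complex structure J
  (multiplication by the imaginary unit), which is real-linear, satisfies J(Jx) = -x
  and preserves the real inner product. The complex inner product is then
  <x,y>_C = x \<bullet> y + i (x \<bullet> J y), and scalar multiplication by c is
  Re c *R x + Im c *R J x.\<close>

definition complex_structure :: "('a::real_inner \<Rightarrow> 'a) \<Rightarrow> bool" where
  "complex_structure J \<longleftrightarrow> linear J \<and> (\<forall>x. J (J x) = - x) \<and> (\<forall>x y. J x \<bullet> J y = x \<bullet> y)"

definition cscale :: "('a::real_vector \<Rightarrow> 'a) \<Rightarrow> complex \<Rightarrow> 'a \<Rightarrow> 'a" where
  "cscale J c x = Re c *\<^sub>R x + Im c *\<^sub>R J x"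

definition bounded_clinear_op :: "('a::real_normed_vector \<Rightarrow> 'a) \<Rightarrow> ('a \<Rightarrow> 'a) \<Rightarrow> bool" where
  "bounded_clinear_op J T \<longleftrightarrow> bounded_linear T \<and> (\<forall>x. T (J x) = J (T x))"

definition cspan :: "('a::real_vector \<Rightarrow> 'a) \<Rightarrow> 'a set \<Rightarrow> 'a set" where
  "cspan J A = span (A \<union> J ` A)"

definition csubspace :: "('a::real_vector \<Rightarrow> 'a) \<Rightarrow> 'a set \<Rightarrow> bool" where
  "csubspace J M \<longleftrightarrow> subspace M \<and> J ` M \<subseteq> M"

definition left_invertible :: "('a::real_normed_vector \<Rightarrow> 'a) \<Rightarrow> ('a \<Rightarrow> 'a) \<Rightarrow> bool" where
  "left_invertible J T \<longleftrightarrow> (\<exists>L. bounded_clinear_op J L \<and> (\<forall>x. L (T x) = x))"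

definition cauchy_dual :: "('a::real_inner \<Rightarrow> 'a) \<Rightarrow> 'a \<Rightarrow> 'a" where
  "cauchy_dual T = T \<circ> inv (adjoint T \<circ> T)"

definition bounded_below :: "('a::real_normed_vector \<Rightarrow> 'a) \<Rightarrow> bool" where
  "bounded_below T \<longleftrightarrow> (\<exists>c>0. \<forall>x. c * norm x \<le> norm (T x))"

definition approx_point_spectrum :: "('a::real_normed_vector \<Rightarrow> 'a) \<Rightarrow> ('a \<Rightarrow> 'a) \<Rightarrow> complex set" where
  "approx_point_spectrum J T = {c. \<not> bounded_below (\<lambda>x. T x - cscale J c x)}"

definition weakly_concave :: "('a::real_inner \<Rightarrow> 'a) \<Rightarrow> ('a \<Rightarrow> 'a) \<Rightarrow> bool" where
  "weakly_concave J T \<longleftrightarrow> bounded_clinear_op J T \<and> left_invertible J T \<and>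
     approx_point_spectrum J T \<subseteq> sphere 0 1 \<and>
     (\<forall>x. norm x \<le> norm (T x)) \<and>
     (\<forall>x. norm (cauchy_dual T (adjoint T x)) \<le> norm (cauchy_dual T (T x)))"

definition reduces :: "('a::real_inner \<Rightarrow> 'a) \<Rightarrow> 'a set \<Rightarrow> ('a \<Rightarrow> 'a) \<Rightarrow> bool" where
  "reduces J M T \<longleftrightarrow> csubspace J M \<and> closed M \<and> T ` M \<subseteq> M \<and> adjoint T ` M \<subseteq> M"

definition unitary_on :: "'a set \<Rightarrow> ('a::real_inner \<Rightarrow> 'a) \<Rightarrow> bool" where
  "unitary_on M T \<longleftrightarrow> T ` M \<subseteq> M \<and> adjoint T ` M \<subseteq> M \<and>
     (\<forall>x\<in>M. adjoint T (T x) = x \<and> T (adjoint T x) = x)"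

definition wandering_subspace_property ::
  "('a::real_normed_vector \<Rightarrow> 'a) \<Rightarrow> 'a set \<Rightarrow> ('a \<Rightarrow> 'a) \<Rightarrow> ('a \<Rightarrow> 'a) \<Rightarrow> bool" where
  "wandering_subspace_property J K S Sadj \<longleftrightarrow>
     K = closure (cspan J (\<Union>n. (S ^^ n) ` {x\<in>K. Sadj x = 0}))"

end

theory Submission
  imports Defs "HOL-Complex_Analysis.Complex_Analysis"
begin

section \<open>Hilbert space basics\<close>

lemma infdist_approx:
  fixes v :: "'a::metric_space"
  assumes "A \<noteq> {}" "e > 0"
  shows "\<exists>a\<in>A. dist v a < infdist v A + e"
proof -
  have "infdist v A < infdist v A + e" using assms by simp
  then have "(INF a\<in>A. dist v a) < infdist v A + e" using infdist_notempty[OF assms(1)] by simp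
  then show ?thesis
    using assms(1) by (subst (asm) cINF_less_iff) (auto intro: bdd_belowI2[where m=0])
qed

lemma quad_zero:
  fixes p q :: real assumes q: "q \<ge> 0" and h: "\<And>t. 0 \<le> -2*t*p + t^2*q" shows "p = 0"
proof -
  define t where "t = p/(q+1)"
  have q1: "q + 1 > 0" using q by simp
  have tq: "p = t * (q+1)" unfolding t_def using q1 by simp
  have e: "-2*t*p + t^2*q = - (t^2) * (q + 2)"
    unfolding tq by (simp add: power2_eq_square algebra_simps)
  have "0 \<le> - (t^2) * (q + 2)" using h[of t] e by simp
  then have "t^2 * (q+2) \<le> 0" by simp
  moreover have "q + 2 > 0" using q by simp
  ultimately have "t^2 \<le> 0" by (simp add: mult_le_0_iff)
  then have "t = 0" by simp
  then show ?thesis using tq by simp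
qed

lemma proj_exists:
  fixes v :: "'a::{real_inner,complete_space}"
  assumes cl: "closed M" and sub: "subspace M"
  shows "\<exists>m\<in>M. \<forall>u\<in>M. (v - m) \<bullet> u = 0"
proof -
  have ne: "M \<noteq> {}" using sub subspace_0 by blast
  define d where "d = infdist v M"
  have d0: "d \<ge> 0" unfolding d_def by (rule infdist_nonneg)
  have dle: "d \<le> norm (v - u)" if "u \<in> M" for u
    using infdist_le[OF that, of v] by (simp add: d_def dist_norm)
  have "\<forall>n. \<exists>a\<in>M. dist v a < d + 1 / real (Suc n)"
    using infdist_approx[OF ne] unfolding d_def by simp
  then obtain m where mM: "\<And>n. m n \<in> M" and md: "\<And>n. dist v (m n) < d + 1 / real (Suc n)"
    by metis
  have md2: "norm (v - m n)^2 \<le> d^2 + (2*d+1) / real (Suc n)" for n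
  proof -
    define s where "s = 1 / real (Suc n)"
    have s0: "0 < s" "s \<le> 1" by (auto simp: s_def)
    have a: "norm (v - m n) < d + s" using md[of n] by (simp add: dist_norm s_def)
    have "norm (v - m n)^2 \<le> (d + s)^2"
      using a by (intro power_mono) auto
    also have "\<dots> = d^2 + (2*d + s) * s"
      by (simp add: power2_eq_square algebra_simps)
    also have "\<dots> \<le> d^2 + (2*d+1) * s"
      using s0 d0 by (intro add_left_mono mult_right_mono) auto
    finally show ?thesis by (simp add: s_def)
  qed
  define h where "h n = (2*d+1) / real (Suc n)" for n
  have md2': "norm (v - m n)^2 \<le> d^2 + h n" for n using md2[of n] by (simp add: h_def)
  have hmono: "h i \<le> h N" if "N \<le> i" for i N
    unfolding h_def using that d0 by (intro divide_left_mono) auto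
  have par: "norm (m i - m j)^2 \<le> 2 * (h i + h j)" for i j
  proof -
    let ?a = "v - m i" and ?b = "v - m j"
    have pl: "norm (?a - ?b)^2 + norm (?a + ?b)^2 = 2 * norm ?a^2 + 2 * norm ?b^2"
      by (simp add: power2_norm_eq_inner inner_diff_left inner_diff_right inner_add_left inner_add_right inner_commute)
    have mid: "(1/2) *\<^sub>R (m i + m j) \<in> M"
      using sub mM by (intro subspace_mul subspace_add) auto
    have dm: "d \<le> norm (v - (1/2) *\<^sub>R (m i + m j))" by (rule dle[OF mid])
    have ab: "?a + ?b = 2 *\<^sub>R (v - (1/2) *\<^sub>R (m i + m j))"
      by (simp add: algebra_simps scaleR_2)
    have "norm (?a + ?b) = 2 * norm (v - (1/2) *\<^sub>R (m i + m j))"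
      unfolding ab by simp
    then have "norm (?a + ?b) \<ge> 2 * d" using dm by linarith
    then have n2: "norm (?a + ?b)^2 \<ge> (2*d)^2" using d0 by (intro power_mono) auto
    have ab2: "?a - ?b = m j - m i" by simp
    have "norm (m j - m i)^2 \<le> 2 * norm ?a^2 + 2 * norm ?b^2 - 4 * d^2"
      using pl n2 unfolding ab2 by (simp add: power_mult_distrib)
    moreover have "norm ?a^2 \<le> d^2 + h i" "norm ?b^2 \<le> d^2 + h j" using md2' by auto
    ultimately have "norm (m j - m i)^2 \<le> 2 * (h i + h j)" by simp
    then show ?thesis by (simp only: norm_minus_commute)
  qed
  have "Cauchy m"
  proof (rule metric_CauchyI)
    fix e :: real assume e: "e > 0"
    have e2: "e^2 > 0" using e by simp
    obtain N where N: "4*(2*d+1) / e^2 < real N" using reals_Archimedean2 by blast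
    have "4*(2*d+1) < real N * e^2" using N e2 by (simp add: pos_divide_less_eq)
    also have "\<dots> \<le> real (Suc N) * e^2" using e2 by (intro mult_right_mono) auto
    finally have "4*(2*d+1) < real (Suc N) * e^2" .
    then have hN: "4 * h N < e^2" by (simp add: h_def divide_less_eq mult.commute)
    show "\<exists>N. \<forall>i\<ge>N. \<forall>j\<ge>N. dist (m i) (m j) < e"
    proof (intro exI allI impI)
      fix i j assume ij: "N \<le> i" "N \<le> j"
      have "norm (m i - m j)^2 \<le> 2 * (h i + h j)" by (rule par)
      also have "\<dots> \<le> 4 * h N" using hmono[OF ij(1)] hmono[OF ij(2)] by simp
      also have "\<dots> < e^2" by (rule hN)
      finally have "norm (m i - m j)^2 < e^2" .
      then have "norm (m i - m j) < e" using e by (simp add: power_less_imp_less_base)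
      then show "dist (m i) (m j) < e" by (simp add: dist_norm)
    qed
  qed
  then obtain l where l: "m \<longlonglongrightarrow> l" using Cauchy_convergent_iff convergent_def by blast
  have lM: "l \<in> M" using cl mM l closed_sequentially by blast
  have "norm (v - l) \<le> d"
  proof (rule LIMSEQ_le)
    show "(\<lambda>n. norm (v - m n)) \<longlonglongrightarrow> norm (v - l)" by (intro tendsto_intros l)
    show "(\<lambda>n. d + 1 / real (Suc n)) \<longlonglongrightarrow> d"
      using tendsto_add[OF tendsto_const LIMSEQ_inverse_real_of_nat, of d] by (simp add: inverse_eq_divide)
    show "\<exists>N. \<forall>n\<ge>N. norm (v - m n) \<le> d + 1 / real (Suc n)"
      using md by (auto simp: dist_norm less_imp_le)
  qed
  then have lmin: "norm (v - l) \<le> norm (v - u)" if "u \<in> M" for u using dle[OF that] by simp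
  have "(v - l) \<bullet> u = 0" if uM: "u \<in> M" for u
  proof (rule quad_zero)
    show "u \<bullet> u \<ge> 0" by simp
    fix t
    have "l + t *\<^sub>R u \<in> M" using sub lM uM by (intro subspace_add subspace_mul) auto
    from lmin[OF this] have "norm (v - l)^2 \<le> norm ((v - l) - t *\<^sub>R u)^2"
      by (intro power_mono) (auto simp: algebra_simps)
    moreover have "norm ((v - l) - t *\<^sub>R u)^2 = norm (v - l)^2 - 2 * t * ((v - l) \<bullet> u) + t^2 * (u \<bullet> u)"
      by (simp only: power2_norm_eq_inner) (simp add: inner_diff_left inner_diff_right inner_commute power2_eq_square algebra_simps)
    ultimately show "0 \<le> - 2 * t * ((v - l) \<bullet> u) + t^2 * (u \<bullet> u)" by simp
  qed
  then show ?thesis using lM by blast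
qed

lemma closed_orthogonal_comp: "closed (orthogonal_comp (W :: 'a::real_inner set))"
proof -
  have "orthogonal_comp W = (\<Inter>y\<in>W. {x. y \<bullet> x = 0})"
    by (auto simp: orthogonal_comp_def orthogonal_def)
  also have "closed \<dots>"
    by (intro closed_INT ballI closed_Collect_eq continuous_intros)
  finally show ?thesis .
qed

lemma subspace_closure':
  fixes S :: "'a::real_normed_vector set"
  assumes S: "subspace S"
  shows "subspace (closure S)"
  unfolding subspace_def
proof (intro conjI ballI allI)
  show "0 \<in> closure S" using S subspace_0 closure_subset by blast
next
  fix x y assume "x \<in> closure S" "y \<in> closure S"
  then obtain f g where f: "\<And>n. f n \<in> S" "f \<longlonglongrightarrow> x" and g: "\<And>n. g n \<in> S" "g \<longlonglongrightarrow> y"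
    unfolding closure_sequential by metis
  have "\<forall>n. f n + g n \<in> S" using f g S subspace_add by blast
  moreover have "(\<lambda>n. f n + g n) \<longlonglongrightarrow> x + y" using f g by (intro tendsto_intros)
  ultimately show "x + y \<in> closure S" unfolding closure_sequential by (intro exI[of _ "\<lambda>n. f n + g n"]) simp
next
  fix c :: real and x assume "x \<in> closure S"
  then obtain f where f: "\<And>n. f n \<in> S" "f \<longlonglongrightarrow> x"
    unfolding closure_sequential by metis
  have "\<forall>n. c *\<^sub>R f n \<in> S" using f S subspace_mul by blast
  moreover have "(\<lambda>n. c *\<^sub>R f n) \<longlonglongrightarrow> c *\<^sub>R x" using f by (intro tendsto_intros)
  ultimately show "c *\<^sub>R x \<in> closure S" unfolding closure_sequential by (intro exI[of _ "\<lambda>n. c *\<^sub>R f n"]) simp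
qed

lemma orth_orth:
  fixes X :: "'a::{real_inner,complete_space} set"
  shows "orthogonal_comp (orthogonal_comp X) = closure (span X)"
proof
  have "span X \<subseteq> orthogonal_comp (orthogonal_comp X)"
    by (intro span_minimal orthogonal_comp_subset subspace_orthogonal_comp)
  then show "closure (span X) \<subseteq> orthogonal_comp (orthogonal_comp X)"
    by (intro closure_minimal closed_orthogonal_comp)
next
  show "orthogonal_comp (orthogonal_comp X) \<subseteq> closure (span X)"
  proof
    fix v assume v: "v \<in> orthogonal_comp (orthogonal_comp X)"
    have sc: "subspace (closure (span X))" by (simp add: subspace_closure' subspace_span)
    obtain m where m: "m \<in> closure (span X)" and mo: "\<And>u. u \<in> closure (span X) \<Longrightarrow> (v - m) \<bullet> u = 0"
      using proj_exists[OF closed_closure sc, of v] by blast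
    have "v - m \<in> orthogonal_comp X"
      unfolding orthogonal_comp_def orthogonal_def
    proof (safe)
      fix y assume "y \<in> X"
      then have "y \<in> closure (span X)" using closure_subset span_superset by blast
      then have "(v - m) \<bullet> y = 0" by (rule mo)
      then show "y \<bullet> (v - m) = 0" by (simp add: inner_commute)
    qed
    then have "(v - m) \<bullet> v = 0" using v by (auto simp: orthogonal_comp_def orthogonal_def)
    moreover have "(v - m) \<bullet> m = 0" using mo m by blast
    ultimately have "(v - m) \<bullet> (v - m) = 0" by (simp add: inner_diff_right)
    then have "v = m" by simp
    then show "v \<in> closure (span X)" using m by simp
  qed
qed

lemma riesz:
  fixes f :: "'a::{real_inner,complete_space} \<Rightarrow> real"
  assumes f: "bounded_linear f"
  shows "\<exists>z. \<forall>x. f x = z \<bullet> x"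
proof (cases "\<forall>x. f x = 0")
  case True then show ?thesis by (intro exI[of _ 0]) auto
next
  case False
  then obtain x0 where x0: "f x0 \<noteq> 0" by blast
  interpret f: bounded_linear f by fact
  let ?K = "{x. f x = 0}"
  have clK: "closed ?K" by (intro closed_Collect_eq continuous_intros f.continuous_on continuous_on_id) 
  have subK: "subspace ?K" by (auto simp: subspace_def f.add f.scale)
  obtain m where mK: "f m = 0" and mo: "\<And>u. f u = 0 \<Longrightarrow> (x0 - m) \<bullet> u = 0"
    using proj_exists[OF clK subK, of x0] by auto
  define r where "r = x0 - m"
  have fr: "f r = f x0" by (simp add: r_def f.diff mK)
  have rr: "r \<bullet> r \<noteq> 0" using fr x0 by auto
  show ?thesis
  proof (intro exI allI)
    fix x
    have "f (x - (f x / f r) *\<^sub>R r) = 0" using fr x0 by (simp add: f.diff f.scale)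
    then have "r \<bullet> (x - (f x / f r) *\<^sub>R r) = 0" using mo r_def by blast
    then have "r \<bullet> x = (f x / f r) * (r \<bullet> r)" by (simp add: inner_diff_right)
    then show "f x = ((f r / (r \<bullet> r)) *\<^sub>R r) \<bullet> x" using fr x0 rr by (simp add: field_simps)
  qed
qed

lemma adjoint_exists:
  fixes T :: "'a::{real_inner,complete_space} \<Rightarrow> 'a"
  assumes T: "bounded_linear T"
  shows "\<forall>x y. T x \<bullet> y = x \<bullet> adjoint T y"
proof -
  interpret T: bounded_linear T by fact
  have "\<forall>y. \<exists>z. \<forall>x. T x \<bullet> y = x \<bullet> z"
  proof
    fix y
    have "bounded_linear (\<lambda>x. T x \<bullet> y)" by (intro bounded_linear_compose[OF bounded_linear_inner_left T])
    from riesz[OF this] obtain z where "\<forall>x. T x \<bullet> y = z \<bullet> x" by blast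
    then show "\<exists>z. \<forall>x. T x \<bullet> y = x \<bullet> z" by (auto simp: inner_commute)
  qed
  then obtain g where "\<forall>y x. T x \<bullet> y = x \<bullet> g y" by metis
  then have "\<forall>x y. T x \<bullet> y = x \<bullet> g y" by blast
  then show ?thesis using adjoint_unique by metis
qed


locale cs =
  fixes J :: "'a::{real_inner,complete_space} \<Rightarrow> 'a"
  assumes cs: "complex_structure J"
begin

lemma J_lin: "linear J" using cs by (simp add: complex_structure_def)
lemma JJ[simp]: "J (J x) = - x" using cs by (simp add: complex_structure_def)
lemma J_inner[simp]: "J x \<bullet> J y = x \<bullet> y" using cs by (simp add: complex_structure_def)
lemma J_add[simp]: "J (x + y) = J x + J y" using J_lin by (rule linear_add)
lemma J_diff[simp]: "J (x - y) = J x - J y" using J_lin by (rule linear_diff)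
lemma J_scaleR[simp]: "J (r *\<^sub>R x) = r *\<^sub>R J x" using J_lin by (rule linear_scale)
lemma J_neg[simp]: "J (- x) = - J x" using J_lin by (rule linear_neg)
lemma J_zero[simp]: "J 0 = 0" using J_lin by (rule linear_0)

lemma J_inner_left: "J x \<bullet> y = - (x \<bullet> J y)"
proof -
  have "J x \<bullet> y = J (J x) \<bullet> J y" by (rule J_inner[symmetric])
  also have "\<dots> = - (x \<bullet> J y)" by simp
  finally show ?thesis .
qed

lemma J_self[simp]: "x \<bullet> J x = 0"
proof -
  have "J x \<bullet> x = - (x \<bullet> J x)" by (rule J_inner_left)
  moreover have "J x \<bullet> x = x \<bullet> J x" by (rule inner_commute)
  ultimately show ?thesis by simp
qed

lemma J_self'[simp]: "J x \<bullet> x = 0"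
  using J_self[of x] by (simp add: inner_commute)

lemma J_norm[simp]: "norm (J x) = norm x" by (simp add: norm_eq_sqrt_inner)

lemma J_bl: "bounded_linear J"
  by (rule bounded_linear_intro[where K=1]) auto

abbreviation sc :: "complex \<Rightarrow> 'a \<Rightarrow> 'a" where "sc \<equiv> cscale J"

lemma sc_add_right: "sc c (x + y) = sc c x + sc c y" by (simp add: cscale_def algebra_simps)
lemma sc_diff_right: "sc c (x - y) = sc c x - sc c y" by (simp add: cscale_def algebra_simps)
lemma sc_neg_right: "sc c (- x) = - sc c x" by (simp add: cscale_def algebra_simps)
lemma sc_zero_right[simp]: "sc c 0 = 0" by (simp add: cscale_def)
lemma sc_add_left: "sc (a + b) x = sc a x + sc b x" by (simp add: cscale_def algebra_simps)
lemma sc_diff_left: "sc (a - b) x = sc a x - sc b x" by (simp add: cscale_def algebra_simps)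
lemma sc_zero_left[simp]: "sc 0 x = 0" by (simp add: cscale_def)
lemma sc_one[simp]: "sc 1 x = x" by (simp add: cscale_def)
lemma sc_mult: "sc a (sc b x) = sc (a * b) x" by (simp add: cscale_def algebra_simps)
lemma sc_J: "J (sc c x) = sc c (J x)" by (simp add: cscale_def algebra_simps)
lemma sc_of_real[simp]: "sc (of_real r) x = r *\<^sub>R x" by (simp add: cscale_def)
lemma sc_scaleR: "sc c (r *\<^sub>R x) = r *\<^sub>R sc c x" by (simp add: cscale_def algebra_simps)
lemma sc_ii[simp]: "sc \<i> x = J x" by (simp add: cscale_def)

lemma norm_sc: "norm (sc c x) = cmod c * norm x"
proof -
  have "norm (sc c x)^2 = sc c x \<bullet> sc c x" by (rule power2_norm_eq_inner)
  also have "\<dots> = (Re c)^2 * (x \<bullet> x) + (Im c)^2 * (x \<bullet> x)"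
    by (simp add: cscale_def inner_add_left inner_add_right power2_eq_square algebra_simps)
  also have "\<dots> = (Re c)^2 * norm x^2 + (Im c)^2 * norm x^2"
    by (simp add: power2_norm_eq_inner)
  also have "\<dots> = (cmod c * norm x)^2"
    by (simp add: power_mult_distrib cmod_power2 algebra_simps)
  finally show ?thesis
    by (metis norm_ge_zero power2_eq_imp_eq mult_nonneg_nonneg)
qed

lemma sc_inverse: "c \<noteq> 0 \<Longrightarrow> sc c (sc (inverse c) x) = x"
  by (simp add: sc_mult)

lemma clinear_sc:
  assumes "bounded_clinear_op J T"
  shows "T (sc c x) = sc c (T x)"
proof -
  from assms have l: "linear T" and j: "\<And>x. T (J x) = J (T x)"
    by (auto simp: bounded_clinear_op_def bounded_linear.linear)
  show ?thesis by (simp add: cscale_def linear_add[OF l] linear_scale[OF l] j)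
qed

definition cinner :: "'a \<Rightarrow> 'a \<Rightarrow> complex" where
  "cinner x y = Complex (x \<bullet> y) (J x \<bullet> y)"

lemma cinner_sc_right: "cinner x (sc c y) = c * cinner x y"
  by (simp add: cinner_def cscale_def complex_eq_iff inner_add_right J_inner_left algebra_simps)

lemma cinner_add_right: "cinner x (y + z) = cinner x y + cinner x z"
  by (simp add: cinner_def complex_eq_iff inner_add_right)

lemma cinner_diff_right: "cinner x (y - z) = cinner x y - cinner x z"
  by (simp add: cinner_def complex_eq_iff inner_diff_right)

lemma cinner_zero_right[simp]: "cinner x 0 = 0"
  by (simp add: cinner_def complex_eq_iff)

lemma cinner_scaleR_right: "cinner x (r *\<^sub>R y) = r *\<^sub>R cinner x y"
  by (simp add: cinner_def complex_eq_iff)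

lemma Re_cinner[simp]: "Re (cinner x y) = x \<bullet> y"
  by (simp add: cinner_def)

lemma norm_cinner: "cmod (cinner x y) \<le> norm x * norm y"
proof -
  define z where "z = cinner x y"
  have "of_real ((cmod z)^2) = cnj z * z" by (metis complex_norm_square mult.commute of_real_power)
  also have "\<dots> = cinner x (sc (cnj z) y)" by (simp add: cinner_sc_right z_def)
  finally have "(cmod z)^2 = x \<bullet> sc (cnj z) y"
    by (metis Re_cinner Re_complex_of_real)
  also have "\<dots> \<le> norm x * norm (sc (cnj z) y)" by (rule norm_cauchy_schwarz)
  also have "\<dots> = cmod z * (norm x * norm y)" by (simp add: norm_sc)
  finally have a: "(cmod z)^2 \<le> cmod z * (norm x * norm y)" .
  show ?thesis
  proof (cases "cmod z = 0")
    case True then show ?thesis by (simp add: z_def)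
  next
    case False
    then have "cmod z > 0" by simp
    with a show ?thesis by (simp add: power2_eq_square z_def)
  qed
qed

lemma bl_cinner: "bounded_linear (cinner x)"
proof (rule bounded_linear_intro[where K="norm x"])
  show "cmod (cinner x y) \<le> norm y * norm x" for y using norm_cinner[of x y] by (simp add: mult.commute)
qed (auto simp: cinner_add_right cinner_scaleR_right)

lemma cinner_sum_right: "cinner x (\<Sum>i\<in>A. f i) = (\<Sum>i\<in>A. cinner x (f i))"
  by (rule linear_sum[OF bounded_linear.linear[OF bl_cinner]])

lemma cinner_self_Re: "x \<bullet> x = Re (cinner x x)" by simp

end


locale csT = cs J for J :: "'a::{real_inner,complete_space} \<Rightarrow> 'a" +
  fixes T :: "'a \<Rightarrow> 'a"
  assumes Tc: "bounded_clinear_op J T"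
    and Tspec: "approx_point_spectrum J T \<subseteq> sphere 0 1"
begin

lemma T_bl: "bounded_linear T" using Tc by (simp add: bounded_clinear_op_def)
lemma T_lin: "linear T" using T_bl by (rule bounded_linear.linear)
lemma T_sc: "T (sc c x) = sc c (T x)" using Tc by (rule clinear_sc)
lemma T_add: "T (x + y) = T x + T y" using T_lin by (rule linear_add)
lemma T_diff: "T (x - y) = T x - T y" using T_lin by (rule linear_diff)
lemma T_zero[simp]: "T 0 = 0" using T_lin by (rule linear_0)

definition KT :: real where "KT = (SOME K. K > 0 \<and> (\<forall>x. norm (T x) \<le> norm x * K))"

lemma KT: "KT > 0" "norm (T x) \<le> norm x * KT"
proof -
  have "\<exists>K. K > 0 \<and> (\<forall>x. norm (T x) \<le> norm x * K)"
    using bounded_linear.pos_bounded[OF T_bl] by blast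
  then have "KT > 0 \<and> (\<forall>x. norm (T x) \<le> norm x * KT)"
    unfolding KT_def by (rule someI_ex)
  then show "KT > 0" "norm (T x) \<le> norm x * KT" by auto
qed

lemma Tpow_bound: "norm ((T ^^ n) x) \<le> KT ^ n * norm x"
proof (induction n)
  case 0 then show ?case by simp
next
  case (Suc n)
  have "norm ((T ^^ Suc n) x) = norm (T ((T ^^ n) x))" by simp
  also have "\<dots> \<le> norm ((T ^^ n) x) * KT" by (rule KT(2))
  also have "\<dots> \<le> KT ^ n * norm x * KT" using Suc KT(1) by (intro mult_right_mono) auto
  finally show ?case by (simp add: algebra_simps)
qed

definition L :: "complex \<Rightarrow> 'a \<Rightarrow> 'a" where "L \<mu> x = x - sc \<mu> (T x)"

lemma L_add: "L \<mu> (x + y) = L \<mu> x + L \<mu> y" by (simp add: L_def T_add sc_add_right)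
lemma L_diff: "L \<mu> (x - y) = L \<mu> x - L \<mu> y" by (simp add: L_def T_diff sc_diff_right)
lemma L_sc: "L \<mu> (sc c x) = sc c (L \<mu> x)" by (simp add: L_def T_sc sc_diff_right sc_mult mult.commute)
lemma L_zero[simp]: "L \<mu> 0 = 0" by (simp add: L_def)
lemma L0[simp]: "L 0 x = x" by (simp add: L_def)
lemma L_change: "L \<nu> x = L \<mu> x - sc (\<nu> - \<mu>) (T x)" by (simp add: L_def sc_diff_left)

lemma L_norm_ge: "norm (L \<nu> x) \<ge> norm (L \<mu> x) - cmod (\<nu> - \<mu>) * KT * norm x"
proof -
  have "norm (L \<mu> x) \<le> norm (L \<nu> x) + norm (sc (\<nu> - \<mu>) (T x))"
    using L_change[of \<nu> x \<mu>] norm_triangle_ineq[of "L \<nu> x" "sc (\<nu> - \<mu>) (T x)"] by simp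
  moreover have "norm (sc (\<nu> - \<mu>) (T x)) \<le> cmod (\<nu> - \<mu>) * KT * norm x"
  proof -
    have "cmod (\<nu> - \<mu>) * norm (T x) \<le> cmod (\<nu> - \<mu>) * (norm x * KT)"
      by (rule mult_left_mono[OF KT(2)]) simp
    then show ?thesis by (simp add: norm_sc algebra_simps)
  qed
  ultimately show ?thesis by linarith
qed

definition bb :: "complex \<Rightarrow> real \<Rightarrow> bool" where "bb \<mu> c \<longleftrightarrow> (\<forall>x. c * norm x \<le> norm (L \<mu> x))"

lemma bb_perturb: assumes "bb \<mu> c" shows "bb \<nu> (c - cmod (\<nu> - \<mu>) * KT)"
  unfolding bb_def
proof
  fix x :: 'a
  have h: "\<forall>x. c * norm x \<le> norm (L \<mu> x)" using assms by (simp add: bb_def)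
  have "(c - cmod (\<nu> - \<mu>) * KT) * norm x = c * norm x - cmod (\<nu> - \<mu>) * KT * norm x"
    by (simp add: left_diff_distrib)
  then show "(c - cmod (\<nu> - \<mu>) * KT) * norm x \<le> norm (L \<nu> x)"
    using spec[OF h, of x] L_norm_ge[where \<nu>=\<nu> and \<mu>=\<mu> and x=x] by linarith
qed

lemma bb_ball: assumes "cmod \<mu> < 1" shows "\<exists>c>0. bb \<mu> c"
proof (cases "\<mu> = 0")
  case True then show ?thesis by (intro exI[of _ 1]) (simp add: bb_def)
next
  case False
  define l where "l = inverse \<mu>"
  have "cmod l > 1" using False assms by (simp add: l_def norm_inverse one_less_inverse_iff)
  then have "l \<notin> approx_point_spectrum J T" using Tspec by auto
  then obtain c where c: "c > 0" "\<And>x. c * norm x \<le> norm (T x - sc l x)"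
    by (auto simp: approx_point_spectrum_def bounded_below_def)
  have eq: "L \<mu> x = - sc \<mu> (T x - sc l x)" for x
    using False by (simp add: L_def sc_diff_right l_def sc_inverse)
  show ?thesis
  proof (intro exI conjI)
    show "cmod \<mu> * c > 0" using c False by simp
    show "bb \<mu> (cmod \<mu> * c)" unfolding bb_def
    proof
      fix x
      have "cmod \<mu> * c * norm x \<le> cmod \<mu> * norm (T x - sc l x)"
        using c(2)[of x] by (simp add: mult.assoc mult_left_mono)
      also have "\<dots> = norm (L \<mu> x)" by (simp add: eq norm_sc)
      finally show "cmod \<mu> * c * norm x \<le> norm (L \<mu> x)" .
    qed
  qed
qed

lemma bb_uniform:
  assumes "\<rho> < 1"
  shows "\<exists>c>0. \<forall>\<mu>. cmod \<mu> \<le> \<rho> \<longrightarrow> bb \<mu> c"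
proof (cases "\<rho> < 0")
  case True
  have "\<not> cmod \<mu> \<le> \<rho>" for \<mu> using True norm_ge_zero[of \<mu>] by linarith
  then show ?thesis by (intro exI[of _ 1]) auto
next
  case False
  have "\<forall>\<mu>\<in>cball 0 \<rho>. \<exists>c. c > 0 \<and> bb \<mu> c"
    using bb_ball assms by (auto simp: dist_norm)
  then obtain cf where cf: "\<And>\<mu>. \<mu> \<in> cball 0 \<rho> \<Longrightarrow> cf \<mu> > 0 \<and> bb \<mu> (cf \<mu>)" by metis
  define B where "B \<mu> = ball \<mu> (cf \<mu> / (2 * KT))" for \<mu>
  have cover: "cball 0 \<rho> \<subseteq> (\<Union>\<mu>\<in>cball 0 \<rho>. B \<mu>)"
    using cf KT(1) by (auto simp: B_def)
  have opn: "\<And>\<mu>. \<mu> \<in> cball 0 \<rho> \<Longrightarrow> open (B \<mu>)" by (simp add: B_def)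
  obtain F where F: "F \<subseteq> cball 0 \<rho>" "finite F" "cball 0 \<rho> \<subseteq> (\<Union>\<mu>\<in>F. B \<mu>)"
    using compactE_image[OF compact_cball opn cover] by blast
  have "0 \<in> cball (0::complex) \<rho>" using False by simp
  then have Fne: "F \<noteq> {}" using F(3) by auto
  define c where "c = Min ((\<lambda>\<mu>. cf \<mu> / 2) ` F)"
  have c0: "c > 0" unfolding c_def using F cf Fne by (subst Min_gr_iff) auto
  show ?thesis
  proof (intro exI conjI allI impI)
    show "c > 0" by (rule c0)
    fix \<nu> assume "cmod \<nu> \<le> \<rho>"
    then have "\<nu> \<in> cball 0 \<rho>" by simp
    then obtain \<mu> where \<mu>: "\<mu> \<in> F" "\<nu> \<in> B \<mu>" using F(3) by auto
    have cmu: "cf \<mu> > 0" "bb \<mu> (cf \<mu>)" using cf \<mu>(1) F(1) by auto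
    have "cmod (\<nu> - \<mu>) < cf \<mu> / (2 * KT)"
      using \<mu>(2) by (simp add: B_def dist_norm norm_minus_commute)
    then have "cmod (\<nu> - \<mu>) * (2 * KT) < cf \<mu>" using KT(1) by (simp add: pos_less_divide_eq)
    moreover have "cmod (\<nu> - \<mu>) * (2 * KT) = 2 * (cmod (\<nu> - \<mu>) * KT)" by simp
    ultimately have d: "cmod (\<nu> - \<mu>) * KT < cf \<mu> / 2" by linarith
    have "bb \<nu> (cf \<mu> - cmod (\<nu> - \<mu>) * KT)" by (rule bb_perturb[OF cmu(2)])
    moreover have "c \<le> cf \<mu> - cmod (\<nu> - \<mu>) * KT"
    proof -
      have "c \<le> cf \<mu> / 2" unfolding c_def using F(2) \<mu>(1) by (intro Min_le) auto
      then show ?thesis using d by linarith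
    qed
    ultimately show "bb \<nu> c" unfolding bb_def by (meson order_trans mult_right_mono norm_ge_zero)
  qed
qed

lemma bb_inj: assumes "bb \<mu> c" "c > 0" "L \<mu> x = L \<mu> y" shows "x = y"
proof -
  have "c * norm (x - y) \<le> norm (L \<mu> (x - y))" using assms(1) by (simp add: bb_def)
  also have "\<dots> = 0" using assms(3) by (simp add: L_diff)
  finally show ?thesis using assms(2) by (simp add: mult_le_0_iff)
qed

lemma open_surj:
  assumes bb: "bb \<mu> c" and c: "c > 0" and s: "surj (L \<mu>)" and d: "cmod (\<nu> - \<mu>) * KT < c"
  shows "surj (L \<nu>)"
proof -
  define R where "R z = (SOME x. L \<mu> x = z)" for z
  have LR: "L \<mu> (R z) = z" for z
  proof -
    have "z \<in> range (L \<mu>)" using s by simp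
    then have "\<exists>x. L \<mu> x = z" by auto
    then show ?thesis unfolding R_def by (rule someI_ex)
  qed
  have Rdiff: "c * norm (R a - R b) \<le> norm (a - b)" for a b
  proof -
    have "L \<mu> (R a - R b) = a - b" by (simp add: L_diff LR)
    moreover have "c * norm (R a - R b) \<le> norm (L \<mu> (R a - R b))"
      using bb unfolding bb_def by blast
    ultimately show ?thesis by simp
  qed
  show ?thesis unfolding surj_def
  proof
    fix y
    define F where "F x = R (y + sc (\<nu> - \<mu>) (T x))" for x
    define k where "k = cmod (\<nu> - \<mu>) * KT / c"
    have k: "0 \<le> k" "k < 1" using d c KT(1) by (auto simp: k_def)
    have "\<forall>x1 x2. dist (F x1) (F x2) \<le> k * dist x1 x2"
    proof (intro allI)
      fix x1 x2
      have "c * norm (F x1 - F x2) \<le> norm (sc (\<nu> - \<mu>) (T x1) - sc (\<nu> - \<mu>) (T x2))"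
        using Rdiff[of "y + sc (\<nu> - \<mu>) (T x1)" "y + sc (\<nu> - \<mu>) (T x2)"] by (simp add: F_def)
      also have "\<dots> = cmod (\<nu> - \<mu>) * norm (T (x1 - x2))"
        by (simp add: sc_diff_right[symmetric] norm_sc T_diff)
      also have "\<dots> \<le> cmod (\<nu> - \<mu>) * (norm (x1 - x2) * KT)"
        using KT(2) by (intro mult_left_mono) auto
      finally have "norm (F x1 - F x2) \<le> k * norm (x1 - x2)"
        using c by (simp add: k_def field_simps)
      then show "dist (F x1) (F x2) \<le> k * dist x1 x2" by (simp add: dist_norm)
    qed
    then obtain x where x: "F x = x" using banach_fix_type[OF k] by blast
    have "L \<mu> x = y + sc (\<nu> - \<mu>) (T x)" using LR x F_def by metis
    then have "L \<nu> x = y" by (simp add: L_change[of \<nu> x \<mu>])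
    then show "\<exists>x. y = L \<nu> x" by metis
  qed
qed

lemma surj_ball:
  assumes "cmod \<mu> < 1" shows "surj (L \<mu>)"
proof -
  have loc: "\<exists>e>0. \<forall>\<nu>. cmod (\<nu> - \<mu>0) < e \<longrightarrow> cmod \<nu> < 1 \<and> (surj (L \<nu>) \<longleftrightarrow> surj (L \<mu>0))"
    if m0: "cmod \<mu>0 < 1" for \<mu>0
  proof -
    obtain c where c: "c > 0" "bb \<mu>0 c" using bb_ball[OF m0] by blast
    define e where "e = min (1 - cmod \<mu>0) (c / (3 * KT))"
    have e0: "e > 0" using m0 c KT(1) by (simp add: e_def)
    show ?thesis
    proof (intro exI conjI allI impI)
      show "e > 0" by (rule e0)
      fix \<nu> assume \<nu>: "cmod (\<nu> - \<mu>0) < e"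
      have "cmod \<nu> \<le> cmod \<mu>0 + cmod (\<nu> - \<mu>0)" by (metis norm_triangle_sub add.commute)
      then show "cmod \<nu> < 1" using \<nu> by (simp add: e_def)
      have "cmod (\<nu> - \<mu>0) < c / (3 * KT)" using \<nu> by (simp add: e_def)
      then have "cmod (\<nu> - \<mu>0) * (3 * KT) < c" using KT(1) by (simp add: pos_less_divide_eq)
      moreover have "cmod (\<nu> - \<mu>0) * (3 * KT) = 3 * (cmod (\<nu> - \<mu>0) * KT)" by simp
      ultimately have dd: "cmod (\<nu> - \<mu>0) * KT < c / 3" by linarith
      show "surj (L \<nu>) \<longleftrightarrow> surj (L \<mu>0)"
      proof
        assume "surj (L \<mu>0)"
        then show "surj (L \<nu>)" using open_surj[OF c(2) c(1)] dd c(1) by simp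
      next
        assume sn: "surj (L \<nu>)"
        have bn: "bb \<nu> (c - cmod (\<nu> - \<mu>0) * KT)" by (rule bb_perturb[OF c(2)])
        have "cmod (\<mu>0 - \<nu>) * KT = cmod (\<nu> - \<mu>0) * KT" by (simp add: norm_minus_commute)
        then have "cmod (\<mu>0 - \<nu>) * KT < c - cmod (\<nu> - \<mu>0) * KT"
          using dd c(1) by linarith
        moreover have "c - cmod (\<nu> - \<mu>0) * KT > 0" using dd c(1) by simp
        ultimately show "surj (L \<mu>0)" using open_surj[OF bn _ sn] by blast
      qed
    qed
  qed
  define A where "A = {\<nu>. cmod \<nu> < 1 \<and> surj (L \<nu>)}"
  define B where "B = {\<nu>. cmod \<nu> < 1 \<and> \<not> surj (L \<nu>)}"
  have oA: "open A" unfolding open_dist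
  proof
    fix x assume "x \<in> A"
    then have x1: "cmod x < 1" and xs: "surj (L x)" by (auto simp: A_def)
    obtain e where e0: "e > 0" and e: "\<And>\<nu>. cmod (\<nu> - x) < e \<Longrightarrow> cmod \<nu> < 1 \<and> (surj (L \<nu>) \<longleftrightarrow> surj (L x))"
      using loc[OF x1] by metis
    show "\<exists>e>0. \<forall>y. dist y x < e \<longrightarrow> y \<in> A"
    proof (intro exI conjI allI impI)
      show "e > 0" by (rule e0)
      fix y assume "dist y x < e"
      then have "cmod (y - x) < e" by (simp add: dist_norm)
      from e[OF this] xs show "y \<in> A" by (simp add: A_def)
    qed
  qed
  have oB: "open B" unfolding open_dist
  proof
    fix x assume "x \<in> B"
    then have x1: "cmod x < 1" and xs: "\<not> surj (L x)" by (auto simp: B_def)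
    obtain e where e0: "e > 0" and e: "\<And>\<nu>. cmod (\<nu> - x) < e \<Longrightarrow> cmod \<nu> < 1 \<and> (surj (L \<nu>) \<longleftrightarrow> surj (L x))"
      using loc[OF x1] by metis
    show "\<exists>e>0. \<forall>y. dist y x < e \<longrightarrow> y \<in> B"
    proof (intro exI conjI allI impI)
      show "e > 0" by (rule e0)
      fix y assume "dist y x < e"
      then have "cmod (y - x) < e" by (simp add: dist_norm)
      from e[OF this] xs show "y \<in> B" by (simp add: B_def)
    qed
  qed
  have "A \<inter> ball 0 1 = {} \<or> B \<inter> ball 0 1 = {}"
    by (rule connectedD[OF connected_ball oA oB]) (auto simp: A_def B_def)
  moreover have "0 \<in> A \<inter> ball 0 1"
  proof -
    have "surj (L 0)" by (simp add: surj_def)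
    then show ?thesis by (simp add: A_def)
  qed
  ultimately have "B \<inter> ball 0 1 = {}" by blast
  then show ?thesis using assms by (auto simp: B_def)
qed

end


context csT
begin

definition R :: "complex \<Rightarrow> 'a \<Rightarrow> 'a" where "R \<mu> y = (SOME x. L \<mu> x = y)"

lemma LR: assumes "cmod \<mu> < 1" shows "L \<mu> (R \<mu> y) = y"
proof -
  have "y \<in> range (L \<mu>)" using surj_ball[OF assms] by simp
  then have "\<exists>x. L \<mu> x = y" by auto
  then show ?thesis unfolding R_def by (rule someI_ex)
qed

lemma L_inj: assumes "cmod \<mu> < 1" "L \<mu> a = L \<mu> b" shows "a = b"
proof -
  obtain c where "c > 0" "bb \<mu> c" using bb_ball[OF assms(1)] by blast
  then show ?thesis using bb_inj assms(2) by blast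
qed

lemma RL: assumes "cmod \<mu> < 1" shows "R \<mu> (L \<mu> x) = x"
  using L_inj[OF assms] LR[OF assms] by blast

lemma R_sc: assumes "cmod \<mu> < 1" shows "R \<mu> (sc c y) = sc c (R \<mu> y)"
  using L_inj[OF assms] by (simp add: LR[OF assms] L_sc)

lemma R_add: assumes "cmod \<mu> < 1" shows "R \<mu> (y + z) = R \<mu> y + R \<mu> z"
  using L_inj[OF assms] by (simp add: LR[OF assms] L_add)

lemma R_diff: assumes "cmod \<mu> < 1" shows "R \<mu> (y - z) = R \<mu> y - R \<mu> z"
  using L_inj[OF assms] by (simp add: LR[OF assms] L_diff)

lemma R_bound: assumes "cmod \<mu> < 1" "bb \<mu> c" shows "c * norm (R \<mu> y) \<le> norm y"
  using assms(2) LR[OF assms(1)] unfolding bb_def by metis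

lemma R_expand: assumes "cmod \<mu> < 1" shows "R \<mu> z = z + sc \<mu> (R \<mu> (T z))"
proof (rule L_inj[OF assms])
  show "L \<mu> (R \<mu> z) = L \<mu> (z + sc \<mu> (R \<mu> (T z)))"
    by (simp add: LR[OF assms] L_add L_sc) (simp add: L_def)
qed

lemma R_resolvent:
  assumes "cmod \<mu> < 1" "cmod \<nu> < 1"
  shows "R \<mu> y - R \<nu> y = sc (\<mu> - \<nu>) (R \<mu> (T (R \<nu> y)))"
proof (rule L_inj[OF assms(1)])
  have "L \<mu> (R \<nu> y) = L \<nu> (R \<nu> y) - sc (\<mu> - \<nu>) (T (R \<nu> y))" by (rule L_change)
  then show "L \<mu> (R \<mu> y - R \<nu> y) = L \<mu> (sc (\<mu> - \<nu>) (R \<mu> (T (R \<nu> y))))"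
    by (simp add: L_diff L_sc LR[OF assms(1)] LR[OF assms(2)])
qed

lemma local_bb:
  assumes "cmod \<nu> < 1"
  shows "\<exists>c>0. \<exists>d>0. \<forall>\<mu>. cmod (\<mu> - \<nu>) < d \<longrightarrow> cmod \<mu> < 1 \<and> bb \<mu> c"
proof -
  define \<rho> where "\<rho> = (1 + cmod \<nu>) / 2"
  have "\<rho> < 1" using assms by (simp add: \<rho>_def)
  then obtain c where c: "c > 0" "\<And>\<mu>. cmod \<mu> \<le> \<rho> \<Longrightarrow> bb \<mu> c" using bb_uniform by blast
  show ?thesis
  proof (intro exI conjI allI impI)
    show "c > 0" by fact
    show "(1 - cmod \<nu>) / 2 > 0" using assms by simp
    fix \<mu> assume \<mu>: "cmod (\<mu> - \<nu>) < (1 - cmod \<nu>) / 2"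
    have "cmod \<mu> \<le> cmod \<nu> + cmod (\<mu> - \<nu>)" by (metis norm_triangle_sub add.commute)
    then have "cmod \<mu> \<le> \<rho>" using \<mu> by (simp add: \<rho>_def)
    then show "cmod \<mu> < 1" "bb \<mu> c" using c \<open>\<rho> < 1\<close> by auto
  qed
qed

lemma R_cont:
  assumes \<nu>: "cmod \<nu> < 1"
  shows "((\<lambda>\<mu>. R \<mu> w) \<longlongrightarrow> R \<nu> w) (at \<nu>)"
proof -
  obtain c d where c: "c > 0" "d > 0" "\<And>\<mu>. cmod (\<mu> - \<nu>) < d \<Longrightarrow> cmod \<mu> < 1 \<and> bb \<mu> c"
    using local_bb[OF \<nu>] by blast
  define M where "M = norm (T (R \<nu> w)) / c"
  have ev: "eventually (\<lambda>\<mu>. norm (R \<mu> w - R \<nu> w) \<le> cmod (\<mu> - \<nu>) * M) (at \<nu>)"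
    unfolding eventually_at
  proof (intro exI[of _ d] conjI ballI impI)
    show "d > 0" by fact
    fix \<mu> assume "\<mu> \<in> UNIV" "\<mu> \<noteq> \<nu> \<and> dist \<mu> \<nu> < d"
    then have m: "cmod \<mu> < 1" "bb \<mu> c" using c by (auto simp: dist_norm)
    have "norm (R \<mu> w - R \<nu> w) = cmod (\<mu> - \<nu>) * norm (R \<mu> (T (R \<nu> w)))"
      by (simp add: R_resolvent[OF m(1) \<nu>] norm_sc)
    also have "\<dots> \<le> cmod (\<mu> - \<nu>) * M"
    proof (intro mult_left_mono)
      have "c * norm (R \<mu> (T (R \<nu> w))) \<le> norm (T (R \<nu> w))" by (rule R_bound[OF m])
      then show "norm (R \<mu> (T (R \<nu> w))) \<le> M" using c(1) by (simp add: M_def field_simps)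
    qed simp
    finally show "norm (R \<mu> w - R \<nu> w) \<le> cmod (\<mu> - \<nu>) * M" .
  qed
  have "((\<lambda>\<mu>. cmod (\<mu> - \<nu>) * M) \<longlongrightarrow> cmod (\<nu> - \<nu>) * M) (at \<nu>)"
    by (intro tendsto_intros)
  then have "((\<lambda>\<mu>. cmod (\<mu> - \<nu>) * M) \<longlongrightarrow> 0) (at \<nu>)" by simp
  from Lim_null_comparison[OF ev this] show ?thesis by (simp add: LIM_zero_iff)
qed

definition psi :: "'a \<Rightarrow> 'a \<Rightarrow> complex \<Rightarrow> complex" where "psi x y \<mu> = cinner x (R \<mu> y)"

lemma psi_deriv:
  assumes \<nu>: "cmod \<nu> < 1"
  shows "(psi x y has_field_derivative cinner x (R \<nu> (T (R \<nu> y)))) (at \<nu>)"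
  unfolding has_field_derivative_iff
proof -
  define w where "w = T (R \<nu> y)"
  have "((\<lambda>\<mu>. cinner x (R \<mu> w)) \<longlongrightarrow> cinner x (R \<nu> w)) (at \<nu>)"
    by (rule bounded_linear.tendsto[OF bl_cinner R_cont[OF \<nu>]])
  moreover have "eventually (\<lambda>\<mu>. cinner x (R \<mu> w) = (psi x y \<mu> - psi x y \<nu>) / (\<mu> - \<nu>)) (at \<nu>)"
  proof -
    obtain c d where c: "c > 0" "d > 0" "\<And>\<mu>. cmod (\<mu> - \<nu>) < d \<Longrightarrow> cmod \<mu> < 1 \<and> bb \<mu> c"
      using local_bb[OF \<nu>] by blast
    show ?thesis unfolding eventually_at
    proof (intro exI[of _ d] conjI ballI impI)
      show "d > 0" by fact
      fix \<mu> assume "\<mu> \<in> UNIV" "\<mu> \<noteq> \<nu> \<and> dist \<mu> \<nu> < d"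
      then have m: "cmod \<mu> < 1" "\<mu> \<noteq> \<nu>" using c by (auto simp: dist_norm)
      have "psi x y \<mu> - psi x y \<nu> = cinner x (R \<mu> y - R \<nu> y)"
        by (simp add: psi_def cinner_diff_right)
      also have "\<dots> = (\<mu> - \<nu>) * cinner x (R \<mu> w)"
        by (simp add: R_resolvent[OF m(1) \<nu>] cinner_sc_right w_def)
      finally show "cinner x (R \<mu> w) = (psi x y \<mu> - psi x y \<nu>) / (\<mu> - \<nu>)"
        using m(2) by simp
    qed
  qed
  ultimately show "((\<lambda>\<mu>. (psi x y \<mu> - psi x y \<nu>) / (\<mu> - \<nu>)) \<longlongrightarrow> cinner x (R \<nu> (T (R \<nu> y)))) (at \<nu>)"
    unfolding w_def by (rule Lim_transform_eventually)
qed

lemma psi_holo: "psi x y holomorphic_on ball 0 1"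
  unfolding holomorphic_on_open[OF open_ball]
proof
  fix \<nu> :: complex assume "\<nu> \<in> ball 0 1"
  then have "cmod \<nu> < 1" by simp
  then show "\<exists>f'. (psi x y has_field_derivative f') (at \<nu>)" using psi_deriv by blast
qed

lemma psi_partial:
  assumes "cmod \<mu> < 1"
  shows "(\<Sum>n<N. cinner x ((T ^^ n) y) * \<mu> ^ n) = psi x y \<mu> - \<mu> ^ N * cinner x (R \<mu> ((T ^^ N) y))"
proof (induction N)
  case 0 then show ?case by (simp add: psi_def)
next
  case (Suc N)
  have e: "R \<mu> ((T ^^ N) y) = (T ^^ N) y + sc \<mu> (R \<mu> (T ((T ^^ N) y)))"
    by (rule R_expand[OF assms])
  have "R \<mu> ((T ^^ N) y) = (T ^^ N) y + sc \<mu> (R \<mu> ((T ^^ Suc N) y))"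
    unfolding e by simp
  then have "\<mu> ^ N * cinner x (R \<mu> ((T ^^ N) y)) =
      \<mu> ^ N * cinner x ((T ^^ N) y) + \<mu> ^ Suc N * cinner x (R \<mu> ((T ^^ Suc N) y))"
    by (simp add: cinner_add_right cinner_sc_right algebra_simps)
  then show ?case using Suc by (simp add: algebra_simps)
qed

lemma psi_sums:
  assumes "cmod \<mu> < 1" "cmod \<mu> * KT < 1"
  shows "(\<lambda>n. cinner x ((T ^^ n) y) * \<mu> ^ n) sums psi x y \<mu>"
proof -
  obtain c where c: "c > 0" "bb \<mu> c" using bb_ball[OF assms(1)] by blast
  define C where "C = norm x * norm y / c"
  have ev: "eventually (\<lambda>N. norm (\<mu> ^ N * cinner x (R \<mu> ((T ^^ N) y))) \<le> (cmod \<mu> * KT) ^ N * C) sequentially"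
  proof (intro always_eventually allI)
    fix N
    have "norm (\<mu> ^ N * cinner x (R \<mu> ((T ^^ N) y))) \<le> cmod \<mu> ^ N * (norm x * norm (R \<mu> ((T ^^ N) y)))"
      by (simp add: norm_mult norm_power mult_left_mono norm_cinner)
    also have "\<dots> \<le> cmod \<mu> ^ N * (norm x * (KT ^ N * norm y / c))"
    proof (intro mult_left_mono)
      have "c * norm (R \<mu> ((T ^^ N) y)) \<le> norm ((T ^^ N) y)" by (rule R_bound[OF assms(1) c(2)])
      also have "\<dots> \<le> KT ^ N * norm y" by (rule Tpow_bound)
      finally show "norm (R \<mu> ((T ^^ N) y)) \<le> KT ^ N * norm y / c" using c(1) by (simp add: field_simps)
    qed auto
    also have "\<dots> = (cmod \<mu> * KT) ^ N * C" by (simp add: C_def power_mult_distrib)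
    finally show "norm (\<mu> ^ N * cinner x (R \<mu> ((T ^^ N) y))) \<le> (cmod \<mu> * KT) ^ N * C" .
  qed
  have "(\<lambda>N. (cmod \<mu> * KT) ^ N * C) \<longlonglongrightarrow> 0 * C"
    using assms(2) KT(1) by (intro tendsto_intros) auto
  then have "(\<lambda>N. \<mu> ^ N * cinner x (R \<mu> ((T ^^ N) y))) \<longlonglongrightarrow> 0"
    using Lim_null_comparison[OF ev] by simp
  then have "(\<lambda>N. psi x y \<mu> - \<mu> ^ N * cinner x (R \<mu> ((T ^^ N) y))) \<longlonglongrightarrow> psi x y \<mu> - 0"
    by (intro tendsto_intros)
  then show ?thesis unfolding sums_def psi_partial[OF assms(1)] by simp
qed

lemma psi_fps: "psi x y has_fps_expansion Abs_fps (\<lambda>n. cinner x ((T ^^ n) y))"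
proof (rule has_fps_expansionI)
  define d where "d = min 1 (1 / KT)"
  have d0: "d > 0" using KT(1) by (simp add: d_def)
  show "eventually (\<lambda>u. (\<lambda>n. fps_nth (Abs_fps (\<lambda>n. cinner x ((T ^^ n) y))) n * u ^ n) sums psi x y u) (nhds 0)"
    unfolding eventually_nhds_metric
  proof (intro exI[of _ d] conjI allI impI)
    show "d > 0" by fact
    fix u :: complex assume "dist u 0 < d"
    then have u: "cmod u < 1" "cmod u < 1 / KT" by (auto simp: d_def)
    have "cmod u * KT < 1" using u(2) KT(1) by (simp add: pos_less_divide_eq)
    then show "(\<lambda>n. fps_nth (Abs_fps (\<lambda>n. cinner x ((T ^^ n) y))) n * u ^ n) sums psi x y u"
      using psi_sums[OF u(1)] by simp
  qed
qed

lemma coeff_bound: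
  assumes s: "s > 1"
  shows "\<exists>C. \<forall>x y n. cmod (cinner x ((T ^^ n) y)) \<le> C * s ^ n * (norm x * norm y)"
proof -
  define \<rho> where "\<rho> = 1 / s"
  have \<rho>: "0 < \<rho>" "\<rho> < 1" using s by (auto simp: \<rho>_def)
  obtain c where c: "c > 0" "\<And>\<mu>. cmod \<mu> \<le> \<rho> \<Longrightarrow> bb \<mu> c" using bb_uniform[OF \<rho>(2)] by blast
  show ?thesis
  proof (intro exI allI)
    fix x y :: 'a and n :: nat
    define B where "B = norm x * norm y / c"
    have sub: "cball 0 \<rho> \<subseteq> ball (0::complex) 1" using \<rho> by auto
    have hol: "psi x y holomorphic_on ball 0 \<rho>"
      by (rule holomorphic_on_subset[OF psi_holo]) (use sub in auto)
    have cont: "continuous_on (cball 0 \<rho>) (psi x y)"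
      by (rule continuous_on_subset[OF holomorphic_on_imp_continuous_on[OF psi_holo] sub])
    have bnd: "norm (psi x y \<mu>) \<le> B" if "norm (0 - \<mu>) = \<rho>" for \<mu>
    proof -
      have m: "cmod \<mu> \<le> \<rho>" "cmod \<mu> < 1" using that \<rho> by auto
      have "norm (psi x y \<mu>) \<le> norm x * norm (R \<mu> y)" by (simp add: psi_def norm_cinner)
      also have "\<dots> \<le> norm x * (norm y / c)"
      proof (intro mult_left_mono)
        have "c * norm (R \<mu> y) \<le> norm y" by (rule R_bound[OF m(2) c(2)[OF m(1)]])
        then show "norm (R \<mu> y) \<le> norm y / c" using c(1) by (simp add: field_simps)
      qed simp
      finally show ?thesis by (simp add: B_def)
    qed
    have ci: "norm ((deriv ^^ n) (psi x y) 0) \<le> fact n * B / \<rho> ^ n"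
      by (rule Cauchy_inequality[OF hol cont \<rho>(1) bnd])
    have "cinner x ((T ^^ n) y) = fps_nth (Abs_fps (\<lambda>n. cinner x ((T ^^ n) y))) n" by simp
    also have "\<dots> = (deriv ^^ n) (psi x y) 0 / fact n" by (rule fps_nth_fps_expansion[OF psi_fps])
    finally have "cmod (cinner x ((T ^^ n) y)) = norm ((deriv ^^ n) (psi x y) 0) / fact n"
      by (simp add: norm_divide)
    also have "\<dots> \<le> (fact n * B / \<rho> ^ n) / fact n"
      by (intro divide_right_mono ci) simp
    also have "\<dots> = (1 / c) * s ^ n * (norm x * norm y)"
      by (simp add: B_def \<rho>_def power_one_over field_simps)
    finally show "cmod (cinner x ((T ^^ n) y)) \<le> (1 / c) * s ^ n * (norm x * norm y)" .
  qed
qed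

lemma SPEC:
  assumes s: "s > 1"
  shows "\<exists>C. \<forall>n y. norm ((T ^^ n) y) \<le> C * s ^ n * norm y"
proof -
  obtain C where C: "\<And>x y n. cmod (cinner x ((T ^^ n) y)) \<le> C * s ^ n * (norm x * norm y)"
    using coeff_bound[OF s] by blast
  show ?thesis
  proof (intro exI allI)
    fix n y
    let ?z = "(T ^^ n) y"
    have "norm ?z * norm ?z = Re (cinner ?z ?z)" by (simp add: dot_square_norm power2_eq_square)
    also have "\<dots> \<le> cmod (cinner ?z ?z)" by (rule complex_Re_le_cmod)
    also have "\<dots> \<le> C * s ^ n * (norm ?z * norm y)" by (rule C)
    finally have h: "norm ?z * norm ?z \<le> norm ?z * (C * s ^ n * norm y)" by (simp add: algebra_simps)
    have m: "C * s ^ n * norm y \<le> max C 0 * s ^ n * norm y"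
      using s by (intro mult_right_mono) auto
    show "norm ?z \<le> max C 0 * s ^ n * norm y"
    proof (cases "norm ?z = 0")
      case True
      then show ?thesis using s by simp
    next
      case False
      then have "norm ?z > 0" by simp
      with h have "norm ?z \<le> C * s ^ n * norm y" by simp
      with m show ?thesis by linarith
    qed
  qed
qed

end


lemma closed_range_bb:
  fixes f :: "'a::{real_inner,complete_space} \<Rightarrow> 'a"
  assumes f: "bounded_linear f" and c: "c > 0" and bb: "\<And>x. c * norm x \<le> norm (f x)"
  shows "closed (range f)"
  unfolding closed_sequential_limits
proof (intro allI impI)
  interpret f: bounded_linear f by fact
  fix s l assume h: "(\<forall>n. s n \<in> range f) \<and> s \<longlonglongrightarrow> l"
  then have "\<forall>n. \<exists>y. s n = f y" by blast
  then have "\<exists>x. \<forall>n. s n = f (x n)" by (rule choice)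
  then obtain x where x: "\<And>n. s n = f (x n)" by blast
  have "Cauchy s" using h LIMSEQ_imp_Cauchy by blast
  have "Cauchy x"
  proof (rule metric_CauchyI)
    fix e :: real assume e: "e > 0"
    then have "c * e > 0" using c by simp
    then obtain N where N: "\<forall>m\<ge>N. \<forall>n\<ge>N. dist (s m) (s n) < c * e"
      using \<open>Cauchy s\<close> metric_CauchyD by blast
    show "\<exists>N. \<forall>m\<ge>N. \<forall>n\<ge>N. dist (x m) (x n) < e"
    proof (intro exI allI impI)
      fix m n assume "m \<ge> N" "n \<ge> N"
      then have "norm (s m - s n) < c * e" using N by (simp add: dist_norm)
      moreover have "c * norm (x m - x n) \<le> norm (s m - s n)" using bb[of "x m - x n"] by (simp add: x f.diff)
      ultimately have "c * norm (x m - x n) < c * e" by linarith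
      then show "dist (x m) (x n) < e" using c by (simp add: dist_norm)
    qed
  qed
  then obtain y where y: "x \<longlonglongrightarrow> y" using Cauchy_convergent_iff convergent_def by blast
  have "(\<lambda>n. f (x n)) \<longlonglongrightarrow> f y" by (rule f.tendsto[OF y])
  moreover have "s = (\<lambda>n. f (x n))" using x by auto
  ultimately have "s \<longlonglongrightarrow> f y" by simp
  then have "l = f y" using h LIMSEQ_unique by blast
  then show "l \<in> range f" by simp
qed

locale wc = cs J for J :: "'a::{real_inner,complete_space} \<Rightarrow> 'a" +
  fixes T :: "'a \<Rightarrow> 'a"
  assumes wc: "weakly_concave J T"
begin

lemma wcT: "bounded_clinear_op J T" "approx_point_spectrum J T \<subseteq> sphere 0 1"
  "\<And>x. norm x \<le> norm (T x)"
  "\<And>x. norm (cauchy_dual T (adjoint T x)) \<le> norm (cauchy_dual T (T x))"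
  using wc by (auto simp: weakly_concave_def)

sublocale csT J T by unfold_locales (use wcT in auto)

abbreviation Ts where "Ts \<equiv> adjoint T"
abbreviation Bi where "Bi \<equiv> inv (adjoint T \<circ> T)"
abbreviation A where "A \<equiv> cauchy_dual T"

lemma adj: "T x \<bullet> y = x \<bullet> Ts y" using adjoint_exists[OF T_bl] by blast

lemma Ts_add: "Ts (a + b) = Ts a + Ts b"
  using vector_eq_ldot by (metis adj T_add inner_add_right)
lemma Ts_scaleR: "Ts (r *\<^sub>R a) = r *\<^sub>R Ts a"
proof -
  have "\<forall>x. x \<bullet> Ts (r *\<^sub>R a) = x \<bullet> r *\<^sub>R Ts a" by (metis adj inner_scaleR_right)
  then show ?thesis using vector_eq_ldot by blast
qed
lemma Ts_lin: "linear Ts" by (rule linearI) (simp_all add: Ts_add Ts_scaleR)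
lemma Ts_diff: "Ts (a - b) = Ts a - Ts b" using Ts_lin by (rule linear_diff)
lemma Ts_zero[simp]: "Ts 0 = 0" using Ts_lin by (rule linear_0)

lemma Ts_norm: "norm (Ts y) \<le> KT * norm y"
proof -
  have "norm (Ts y)^2 = T (Ts y) \<bullet> y" by (simp add: adj power2_norm_eq_inner)
  also have "\<dots> \<le> norm (T (Ts y)) * norm y" by (rule norm_cauchy_schwarz)
  also have "\<dots> \<le> norm (Ts y) * KT * norm y" using KT(2) by (intro mult_right_mono) auto
  finally have h: "norm (Ts y) * norm (Ts y) \<le> norm (Ts y) * (KT * norm y)" by (simp add: power2_eq_square algebra_simps)
  show ?thesis
  proof (cases "norm (Ts y) = 0")
    case True then show ?thesis using KT(1) by simp
  next
    case False then show ?thesis using h by simp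
  qed
qed

lemma Ts_bl: "bounded_linear Ts"
proof (rule bounded_linear_intro[where K=KT])
  show "norm (Ts x) \<le> norm x * KT" for x
    using Ts_norm[of x] by (simp only: mult.commute)
qed (simp_all add: Ts_add Ts_scaleR)

lemma Ts_J: "Ts (J x) = J (Ts x)"
proof -
  have "\<forall>z. z \<bullet> Ts (J x) = z \<bullet> J (Ts x)"
  proof
    fix z
    have "z \<bullet> Ts (J x) = T z \<bullet> J x" by (simp add: adj)
    also have "\<dots> = - (J (T z) \<bullet> x)" by (simp add: J_inner_left inner_commute)
    also have "\<dots> = - (T (J z) \<bullet> x)" using wcT(1) by (simp add: bounded_clinear_op_def)
    also have "\<dots> = - (J z \<bullet> Ts x)" by (simp add: adj)
    also have "\<dots> = z \<bullet> J (Ts x)" by (simp add: J_inner_left)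
    finally show "z \<bullet> Ts (J x) = z \<bullet> J (Ts x)" .
  qed
  then show ?thesis using vector_eq_ldot by blast
qed

lemma Tpow_adj: "(T ^^ k) u \<bullet> v = u \<bullet> (Ts ^^ k) v"
proof (induction k arbitrary: v)
  case 0 then show ?case by simp
next
  case (Suc k)
  have "(T ^^ Suc k) u \<bullet> v = (T ^^ k) u \<bullet> Ts v" by (simp add: adj)
  also have "\<dots> = u \<bullet> (Ts ^^ k) (Ts v)" by (rule Suc)
  also have "\<dots> = u \<bullet> (Ts ^^ Suc k) v" by (simp add: funpow_Suc_right del: funpow.simps)
  finally show ?case .
qed

definition B :: "'a \<Rightarrow> 'a" where "B x = Ts (T x)"

lemma B_inner: "B x \<bullet> x = norm (T x)^2"
  by (simp add: B_def adj[symmetric] power2_norm_eq_inner inner_commute)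

lemma B_self: "B x \<bullet> y = x \<bullet> B y"
  by (simp add: B_def adj[symmetric] inner_commute)

lemma B_bb: "norm x \<le> norm (B x)"
proof -
  have "norm x^2 \<le> norm (T x)^2" using wcT(3) by (intro power_mono) auto
  also have "\<dots> = B x \<bullet> x" by (simp add: B_inner)
  also have "\<dots> \<le> norm (B x) * norm x" by (rule norm_cauchy_schwarz)
  finally have h: "norm x * norm x \<le> norm x * norm (B x)" by (simp add: power2_eq_square mult.commute)
  show ?thesis
  proof (cases "norm x = 0")
    case True then show ?thesis by simp
  next
    case False then show ?thesis using h by simp
  qed
qed

lemma B_bl: "bounded_linear B"
  unfolding B_def by (rule bounded_linear_compose[OF Ts_bl T_bl])

lemma B_lin: "linear B" using B_bl by (rule bounded_linear.linear)

lemma B_inj: "B x = B y \<Longrightarrow> x = y"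
  using B_bb[of "x - y"] by (simp add: linear_diff[OF B_lin])

lemma B_surj: "surj B"
proof -
  have cl: "closed (range B)" by (rule closed_range_bb[OF B_bl, of 1]) (simp_all add: B_bb)
  have sub: "subspace (range B)" by (rule linear_subspace_image[OF B_lin subspace_UNIV])
  show ?thesis
  proof (rule surjI[of _ "\<lambda>v. SOME x. B x = v"])
    fix v
    obtain m where m: "m \<in> range B" and mo: "\<And>u. u \<in> range B \<Longrightarrow> (v - m) \<bullet> u = 0"
      using proj_exists[OF cl sub, of v] by blast
    have "(v - m) \<bullet> B (v - m) = 0" using mo by blast
    then have "norm (T (v - m))^2 = 0" by (simp add: B_inner[symmetric] inner_commute)
    then have "norm (v - m) = 0" using wcT(3)[of "v - m"] by simp
    then have "v \<in> range B" using m by simp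
    then have "\<exists>x. B x = v" by auto
    then show "B (SOME x. B x = v) = v" by (rule someI_ex)
  qed
qed

lemma Bf_eq: "(adjoint T \<circ> T) = B" by (auto simp: B_def)

lemma B_Bi[simp]: "B (Bi y) = y"
  unfolding Bf_eq using B_surj by (simp add: surj_f_inv_f)

lemma Bi_B[simp]: "Bi (B x) = x"
  unfolding Bf_eq using B_inj by (meson injI inv_f_f)

lemma Bi_eqI: "B x = y \<Longrightarrow> Bi y = x" by auto

lemma Bi_add: "Bi (a + b) = Bi a + Bi b"
  by (rule Bi_eqI) (simp add: linear_add[OF B_lin])
lemma Bi_diff: "Bi (a - b) = Bi a - Bi b"
  by (rule Bi_eqI) (simp add: linear_diff[OF B_lin])
lemma Bi_scaleR: "Bi (r *\<^sub>R a) = r *\<^sub>R Bi a"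
  by (rule Bi_eqI) (simp add: linear_scale[OF B_lin])
lemma Bi_norm: "norm (Bi y) \<le> norm y" using B_bb[of "Bi y"] by simp
lemma Bi_bl: "bounded_linear Bi"
  by (rule bounded_linear_intro[where K=1]) (simp_all add: Bi_add Bi_scaleR Bi_norm)
lemma Bi_self: "Bi a \<bullet> b = a \<bullet> Bi b"
proof -
  have "Bi a \<bullet> b = Bi a \<bullet> B (Bi b)" by simp
  also have "\<dots> = B (Bi a) \<bullet> Bi b" by (rule B_self[symmetric])
  finally show ?thesis by simp
qed
lemma B_J: "B (J x) = J (B x)"
  using wcT(1) by (simp add: B_def Ts_J bounded_clinear_op_def)
lemma Bi_J: "Bi (J y) = J (Bi y)"
  by (rule Bi_eqI) (simp add: B_J)

lemma A_eq: "A y = T (Bi y)" by (simp add: cauchy_dual_def)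

lemma A_add: "A (a + b) = A a + A b" by (simp add: A_eq Bi_add T_add)
lemma A_diff: "A (a - b) = A a - A b" by (simp add: A_eq Bi_diff T_diff)
lemma A_scaleR: "A (r *\<^sub>R a) = r *\<^sub>R A a"
  by (simp add: A_eq Bi_scaleR linear_scale[OF T_lin])
lemma A_J: "A (J y) = J (A y)"
  using wcT(1) by (simp add: A_eq Bi_J bounded_clinear_op_def)
lemma A_bl: "bounded_linear A"
proof -
  have "A = (\<lambda>y. T (Bi y))" by (auto simp: cauchy_dual_def)
  then show ?thesis using bounded_linear_compose[OF T_bl Bi_bl] by simp
qed
lemma A_lin: "linear A" using A_bl by (rule bounded_linear.linear)

lemma Ts_A[simp]: "Ts (A y) = y"
  using B_Bi[of y] by (simp add: A_eq B_def)

lemma A_adj: "A u \<bullet> v = u \<bullet> Bi (Ts v)"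
  by (simp add: A_eq adj Bi_self)

lemma A_contr: "norm (A y) \<le> norm y"
proof -
  define x where "x = Bi y"
  have "norm (A y)^2 = norm (T x)^2" by (simp add: x_def A_eq)
  also have "\<dots> = B x \<bullet> x" by (rule B_inner[symmetric])
  also have "\<dots> = y \<bullet> x" unfolding x_def B_Bi ..
  also have "\<dots> \<le> norm y * norm x" by (rule norm_cauchy_schwarz)
  also have "\<dots> \<le> norm y * norm y" using Bi_norm[of y] by (intro mult_left_mono) (auto simp: x_def)
  finally have "norm (A y)^2 \<le> (norm y)^2" by (simp add: power2_eq_square)
  then show ?thesis by (rule power2_le_imp_le) simp
qed

lemma A_bb: "norm y \<le> KT * norm (A y)"
  using Ts_norm[of "A y"] by simp

definition P :: "'a \<Rightarrow> 'a" where "P x = A (Ts x)"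

lemma P_alt: "P x = T (Bi (Ts x))" by (simp add: P_def A_eq)
lemma P_self: "P x \<bullet> y = x \<bullet> P y"
proof -
  have "P x \<bullet> y = Bi (Ts x) \<bullet> Ts y" by (simp add: P_alt adj)
  also have "\<dots> = Ts x \<bullet> Bi (Ts y)" by (rule Bi_self)
  also have "\<dots> = Bi (Ts y) \<bullet> Ts x" by (rule inner_commute)
  also have "\<dots> = P y \<bullet> x" by (simp add: P_alt adj)
  also have "\<dots> = x \<bullet> P y" by (rule inner_commute)
  finally show ?thesis .
qed
lemma P_A[simp]: "P (A y) = A y" by (simp add: P_def)
lemma P_P: "P (P x) = P x" by (simp add: P_def)
lemma Ts_P: "Ts (P x) = Ts x" by (simp add: P_def)
lemma TA_P: "T (Bi (Ts x)) = P x" by (simp add: P_alt)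

lemma concave3: "norm (A (Ts x)) \<le> norm (A (T x))" by (rule wcT(4))

lemma logconvex:
  assumes "P w = w"
  shows "norm (A w)^2 \<le> norm (A (A w)) * norm w"
proof -
  define u where "u = Bi (Ts (A w))"
  have "norm (A w)^2 = A w \<bullet> A w" by (simp add: power2_norm_eq_inner)
  also have "\<dots> = w \<bullet> u" by (simp add: A_adj u_def)
  also have "\<dots> = P w \<bullet> u" using assms by simp
  also have "\<dots> = w \<bullet> P u" by (rule P_self)
  also have "\<dots> \<le> norm w * norm (P u)" by (rule norm_cauchy_schwarz)
  also have "\<dots> \<le> norm w * norm (A (A w))"
  proof (intro mult_left_mono)
    have Tu: "T u = A w" unfolding u_def TA_P by simp
    have "norm (P u) = norm (A (Ts u))" by (simp add: P_def)
    also have "\<dots> \<le> norm (A (T u))" by (rule concave3)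
    finally show "norm (P u) \<le> norm (A (A w))" by (simp add: Tu)
  qed simp
  finally show ?thesis by (simp add: mult.commute)
qed

end


lemma bounded_linear_funpow:
  fixes f :: "'a::real_normed_vector \<Rightarrow> 'a"
  assumes "bounded_linear f" shows "bounded_linear (f ^^ n)"
proof (induction n)
  case 0
  have "(f ^^ 0) = (\<lambda>x. x)" by (rule ext) simp
  then show ?case using bounded_linear_ident by metis
next
  case (Suc n)
  have "bounded_linear (\<lambda>x. f ((f ^^ n) x))" by (rule bounded_linear_compose[OF assms Suc])
  moreover have "(f ^^ Suc n) = (\<lambda>x. f ((f ^^ n) x))" by (rule ext) simp
  ultimately show ?case by simp
qed

context wc
begin

definition N where "N = (\<Inter>n. range (A ^^ n))"

lemma N_ex: "x \<in> N \<Longrightarrow> \<exists>y. x = (A ^^ n) y" by (auto simp: N_def)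

lemma N_P: assumes "x \<in> N" shows "P x = x"
proof -
  obtain y where "x = (A ^^ Suc 0) y" using N_ex[OF assms] by blast
  then show ?thesis by simp
qed

lemma N_ATs: "x \<in> N \<Longrightarrow> A (Ts x) = x" using N_P by (simp add: P_def)

lemma N_Ts: assumes "x \<in> N" shows "Ts x \<in> N"
  unfolding N_def
proof
  fix n
  obtain y where "x = (A ^^ Suc n) y" using N_ex[OF assms] by blast
  then have "Ts x = (A ^^ n) y" by simp
  then show "Ts x \<in> range (A ^^ n)" by simp
qed

lemma N_A: assumes "x \<in> N" shows "A x \<in> N"
  unfolding N_def
proof
  fix n
  obtain y where "x = (A ^^ n) y" using N_ex[OF assms] by blast
  then have "A x = (A ^^ n) (A y)" by (simp add: funpow_swap1)
  then show "A x \<in> range (A ^^ n)" by simp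
qed

lemma N_Tspow: "x \<in> N \<Longrightarrow> (Ts ^^ k) x \<in> N"
  by (induction k) (auto simp: N_Ts)

lemma N_Apow: "x \<in> N \<Longrightarrow> (A ^^ k) x \<in> N"
  by (induction k) (auto simp: N_A)

lemma Apow_Tspow: "x \<in> N \<Longrightarrow> (A ^^ k) ((Ts ^^ k) x) = x"
proof (induction k)
  case 0 then show ?case by simp
next
  case (Suc k)
  have e1: "(Ts ^^ Suc k) x = Ts ((Ts ^^ k) x)" by (simp only: funpow.simps(2) o_apply)
  have e2: "(A ^^ Suc k) v = (A ^^ k) (A v)" for v by (simp only: funpow_Suc_right o_apply)
  have "(A ^^ Suc k) ((Ts ^^ Suc k) x) = (A ^^ k) (A (Ts ((Ts ^^ k) x)))"
    by (simp only: e1 e2)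
  also have "A (Ts ((Ts ^^ k) x)) = (Ts ^^ k) x" by (rule N_ATs[OF N_Tspow[OF Suc.prems]])
  finally show ?case using Suc by simp
qed

lemma Tspow_Apow: "(Ts ^^ k) ((A ^^ k) y) = y"
proof (induction k)
  case 0 then show ?case by simp
next
  case (Suc k)
  have e1: "(A ^^ Suc k) y = A ((A ^^ k) y)" by (simp only: funpow.simps(2) o_apply)
  have e2: "(Ts ^^ Suc k) v = (Ts ^^ k) (Ts v)" for v by (simp only: funpow_Suc_right o_apply)
  have "(Ts ^^ Suc k) ((A ^^ Suc k) y) = (Ts ^^ k) (Ts (A ((A ^^ k) y)))"
    by (simp only: e1 e2)
  also have "\<dots> = (Ts ^^ k) ((A ^^ k) y)" by (simp only: Ts_A)
  finally show ?case using Suc by simp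
qed

lemma Tspow_norm: "norm ((Ts ^^ k) y) \<le> KT ^ k * norm y"
proof (induction k)
  case 0 then show ?case by simp
next
  case (Suc k)
  have "norm ((Ts ^^ Suc k) y) = norm (Ts ((Ts ^^ k) y))" by simp
  also have "\<dots> \<le> KT * norm ((Ts ^^ k) y)" by (rule Ts_norm)
  also have "\<dots> \<le> KT * (KT ^ k * norm y)" using Suc KT(1) by (intro mult_left_mono) auto
  finally show ?case by simp
qed

lemma growth:
  assumes w: "w \<in> N" and lt: "norm (A w) < norm w"
  shows "(norm w / norm (A w)) ^ k * norm w \<le> norm ((Ts ^^ k) w)"
proof -
  define z where "z k = (Ts ^^ k) w" for k
  define q where "q = norm w / norm (A w)"
  have Aw0: "norm (A w) > 0"
  proof (rule ccontr)
    assume "\<not> norm (A w) > 0"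
    then have "A w = 0" by simp
    then have "w = 0" using Ts_A[of w] by simp
    then show False using lt by simp
  qed
  have zN: "z k \<in> N" for k using N_Tspow[OF w] by (simp add: z_def)
  have zS: "z (Suc k) = Ts (z k)" for k by (simp add: z_def)
  have Az: "A (z (Suc k)) = z k" for k using N_ATs[OF zN[of k]] by (simp add: zS)
  have Pz: "P (z k) = z k" for k by (rule N_P[OF zN])
  have zpos: "norm (z k) > 0" for k
  proof -
    have "(A ^^ k) (z k) = w" unfolding z_def by (rule Apow_Tspow[OF w])
    moreover have "w \<noteq> 0" using lt by auto
    ultimately have "z k \<noteq> 0" by (auto simp: linear_0[OF bounded_linear.linear[OF bounded_linear_funpow[OF A_bl]]])
    then show ?thesis by simp
  qed
  have lc: "norm (z (Suc k))^2 \<le> norm (z k) * norm (z (Suc (Suc k)))" for k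
    using logconvex[OF Pz[of "Suc (Suc k)"]] by (simp add: Az mult.commute)
  have step: "q * norm (z k) \<le> norm (z (Suc k))" for k
  proof (induction k)
    case 0
    have "norm w ^2 \<le> norm (A w) * norm (z 1)"
      using logconvex[OF Pz[of 1]] Az[of 0] by (simp add: z_def)
    then show ?case using Aw0 by (simp add: q_def z_def power2_eq_square field_simps)
  next
    case (Suc k)
    have "q * norm (z k) * norm (z (Suc k)) \<le> norm (z (Suc k)) * norm (z (Suc k))"
      using Suc by (intro mult_right_mono) auto
    also have "\<dots> \<le> norm (z k) * norm (z (Suc (Suc k)))" using lc[of k] by (simp add: power2_eq_square)
    finally have "norm (z k) * (q * norm (z (Suc k))) \<le> norm (z k) * norm (z (Suc (Suc k)))"
      by (simp add: algebra_simps)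
    then show ?case using zpos[of k] by simp
  qed
  have "q ^ k * norm w \<le> norm (z k)" for k
  proof (induction k)
    case 0 then show ?case by (simp add: z_def)
  next
    case (Suc k)
    have q0: "q \<ge> 0" using Aw0 by (simp add: q_def)
    have "q ^ Suc k * norm w = q * (q ^ k * norm w)" by simp
    also have "\<dots> \<le> q * norm (z k)" using Suc q0 by (intro mult_left_mono) auto
    also have "\<dots> \<le> norm (z (Suc k))" by (rule step)
    finally show ?case .
  qed
  then show ?thesis by (simp add: q_def z_def)
qed

end


context wc
begin

lemma iso: assumes w: "w \<in> N" shows "norm (A w) = norm w"
proof (rule ccontr)
  assume ne: "norm (A w) \<noteq> norm w"
  then have lt: "norm (A w) < norm w" using A_contr[of w] by simp
  have Aw0: "norm (A w) > 0"
  proof (rule ccontr)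
    assume "\<not> norm (A w) > 0"
    then have "A w = 0" by simp
    then have "w = 0" using Ts_A[of w] by simp
    then show False using lt by simp
  qed
  define q where "q = norm w / norm (A w)"
  have q1: "q > 1" using lt Aw0 by (simp add: q_def)
  define s where "s = (1 + q) / 2"
  have s1: "s > 1" "s < q" using q1 by (auto simp: s_def)
  obtain C where C: "\<And>n y. norm ((T ^^ n) y) \<le> C * s ^ n * norm y" using SPEC[OF s1(1)] by blast
  have w0: "norm w > 0" using lt norm_ge_zero[of "A w"] by linarith
  have bound: "q ^ k \<le> C * s ^ k" for k
  proof -
    define z where "z = (Ts ^^ k) w"
    have gz: "q ^ k * norm w \<le> norm z" unfolding z_def q_def by (rule growth[OF w lt])
    have zpos: "norm z > 0"
    proof -
      have "q ^ k * norm w > 0" using q1 w0 by simp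
      then show ?thesis using gz by linarith
    qed
    have "norm z * norm z = z \<bullet> z" by (simp add: dot_square_norm power2_eq_square)
    also have "\<dots> = (T ^^ k) z \<bullet> w" unfolding Tpow_adj by (simp add: z_def inner_commute)
    also have "\<dots> \<le> norm ((T ^^ k) z) * norm w" by (rule norm_cauchy_schwarz)
    also have "\<dots> \<le> C * s ^ k * norm z * norm w" using C[of k z] w0 by (intro mult_right_mono) auto
    finally have "norm z * norm z \<le> norm z * (C * s ^ k * norm w)" by (simp add: algebra_simps)
    then have "norm z \<le> C * s ^ k * norm w" using zpos by simp
    with gz have "q ^ k * norm w \<le> (C * s ^ k) * norm w" by simp
    then show ?thesis using w0 by simp
  qed
  have "q / s > 1" using s1 by simp
  then obtain k where k: "max C 0 < (q / s) ^ k" using real_arch_pow by blast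
  have "(q / s) ^ k = q ^ k / s ^ k" by (simp add: power_divide)
  also have "\<dots> \<le> C * s ^ k / s ^ k" using bound[of k] s1 by (intro divide_right_mono) auto
  also have "\<dots> = C" using s1 by simp
  finally show False using k by simp
qed

lemma N_Bi: assumes w: "w \<in> N" shows "Bi w = w"
proof -
  define x where "x = Bi w"
  have Bx: "B x = w" by (simp add: x_def)
  have "norm w ^ 2 = norm (A w) ^ 2" using iso[OF w] by simp
  also have "\<dots> = norm (T x) ^ 2" by (simp add: A_eq x_def)
  also have "\<dots> = B x \<bullet> x" by (rule B_inner[symmetric])
  finally have wx: "norm w ^ 2 = w \<bullet> x" by (simp add: Bx)
  have xw: "norm x \<le> norm w" using B_bb[of x] Bx by simp
  have "norm (w - x) ^ 2 = norm w ^ 2 - 2 * (w \<bullet> x) + norm x ^ 2"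
    by (simp add: power2_norm_eq_inner inner_diff_left inner_diff_right inner_commute)
  also have "\<dots> = norm x ^ 2 - norm w ^ 2" using wx by simp
  also have "\<dots> \<le> 0" using xw by (simp add: power_mono)
  finally have "norm (w - x) ^ 2 \<le> 0" .
  then have "w - x = 0" by simp
  then show ?thesis by (simp add: x_def)
qed

lemma N_T: "w \<in> N \<Longrightarrow> T w = A w" by (simp add: A_eq N_Bi)
lemma N_TsT: assumes "w \<in> N" shows "Ts (T w) = w"
proof -
  have "Ts (T w) = B w" by (simp add: B_def)
  also have "\<dots> = B (Bi w)" by (simp add: N_Bi[OF assms])
  finally show ?thesis by simp
qed
lemma N_TTs: "w \<in> N \<Longrightarrow> T (Ts w) = w" by (simp add: N_T N_Ts N_ATs)
lemma N_T_in: "w \<in> N \<Longrightarrow> T w \<in> N" by (simp add: N_T N_A)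

lemma Apow_Tpow: "v \<in> N \<Longrightarrow> (A ^^ n) v = (T ^^ n) v"
proof (induction n)
  case 0 then show ?case by simp
next
  case (Suc n)
  have "(A ^^ Suc n) v = A ((A ^^ n) v)" by simp
  also have "\<dots> = T ((A ^^ n) v)" using N_T[OF N_Apow[OF Suc.prems]] by simp
  also have "\<dots> = (T ^^ Suc n) v" using Suc by simp
  finally show ?case .
qed

lemma N_sub_Hu: "N \<subseteq> (\<Inter>n. range (T ^^ n))"
proof (intro subsetI InterI, clarsimp)
  fix w n assume w: "w \<in> N"
  have "w = (A ^^ n) ((Ts ^^ n) w)" by (rule Apow_Tspow[OF w, symmetric])
  also have "\<dots> = (T ^^ n) ((Ts ^^ n) w)" by (rule Apow_Tpow[OF N_Tspow[OF w]])
  finally show "w \<in> range (T ^^ n)" by simp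
qed

lemma N_closed: "closed N"
  unfolding N_def
proof (intro closed_INT ballI)
  fix n
  have pos: "KT ^ n > 0" using KT(1) by simp
  show "closed (range (A ^^ n))"
  proof (rule closed_range_bb[OF bounded_linear_funpow[OF A_bl]])
    show "1 / KT ^ n > 0" using pos by simp
    fix y
    have "norm y = norm ((Ts ^^ n) ((A ^^ n) y))" by (simp add: Tspow_Apow)
    also have "\<dots> \<le> KT ^ n * norm ((A ^^ n) y)" by (rule Tspow_norm)
    finally show "1 / KT ^ n * norm y \<le> norm ((A ^^ n) y)" using pos by (simp add: field_simps)
  qed
qed

lemma Apow_J: "(A ^^ n) (J y) = J ((A ^^ n) y)"
  by (induction n) (simp_all add: A_J)

lemma N_csub: "csubspace J N"
  unfolding csubspace_def
proof
  show "subspace N" unfolding N_def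
    by (intro subspace_Inter ballI) (auto intro: linear_subspace_image[OF bounded_linear.linear[OF bounded_linear_funpow[OF A_bl]] subspace_UNIV])
  show "J ` N \<subseteq> N"
  proof (clarsimp simp: N_def)
    fix x n assume "\<forall>n. x \<in> range (A ^^ n)"
    then obtain y where "x = (A ^^ n) y" by blast
    then have "J x = (A ^^ n) (J y)" by (simp add: Apow_J)
    then show "J x \<in> range (A ^^ n)" by simp
  qed
qed

lemma ker_in_K: assumes "Ts x = 0" shows "x \<in> orthogonal_comp N"
  unfolding orthogonal_comp_def orthogonal_def
proof (clarify)
  fix y assume "y \<in> N"
  then have "y \<bullet> x = A (Ts y) \<bullet> x" by (simp add: N_ATs)
  also have "\<dots> = 0" by (simp add: A_adj assms linear_0[OF bounded_linear.linear[OF Bi_bl]])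
  finally show "y \<bullet> x = 0" .
qed

end


context wc
begin

lemma Tpow_J: "(T ^^ n) (J y) = J ((T ^^ n) y)"
  using wcT(1) by (induction n) (simp_all add: bounded_clinear_op_def)

lemma P_diff: "P (a - b) = P a - P b" by (simp add: P_def Ts_diff A_diff)

lemma Pfix:
  assumes h: "\<And>e k. Ts e = 0 \<Longrightarrow> (T ^^ k) e \<bullet> x = 0"
  shows "P ((Ts ^^ k) x) = (Ts ^^ k) x"
proof -
  define u where "u = (Ts ^^ k) x"
  define e where "e = u - P u"
  have Te: "Ts e = 0" by (simp add: e_def Ts_diff Ts_P)
  have eu: "e \<bullet> u = 0" using h[OF Te, of k] by (simp add: Tpow_adj u_def)
  have Pe: "P e = 0" by (simp add: e_def P_diff P_P)
  have "e \<bullet> P u = P e \<bullet> u" by (simp add: P_self)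
  also have "\<dots> = 0" by (simp add: Pe)
  finally have ePu: "e \<bullet> P u = 0" .
  have "e \<bullet> e = e \<bullet> u - e \<bullet> P u" by (simp add: e_def inner_diff_right)
  also have "\<dots> = 0" by (simp add: eu ePu)
  finally have "e = 0" by simp
  then show ?thesis by (simp add: e_def u_def)
qed

lemma N_orth:
  defines "S0 \<equiv> (\<Union>n. (T ^^ n) ` {x \<in> orthogonal_comp N. Ts x = 0})"
  shows "N = orthogonal_comp (S0 \<union> J ` S0)"
proof
  show "N \<subseteq> orthogonal_comp (S0 \<union> J ` S0)"
  proof
    fix y assume y: "y \<in> N"
    have key: "(T ^^ n) e \<bullet> y = 0" if "e \<in> orthogonal_comp N" for e n
    proof -
      have "(T ^^ n) e \<bullet> y = e \<bullet> (Ts ^^ n) y" by (rule Tpow_adj)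
      also have "\<dots> = 0" using that N_Tspow[OF y, of n]
        by (auto simp: orthogonal_comp_def orthogonal_def inner_commute)
      finally show ?thesis .
    qed
    show "y \<in> orthogonal_comp (S0 \<union> J ` S0)"
      unfolding orthogonal_comp_def orthogonal_def
    proof (clarify)
      fix v assume "v \<in> S0 \<union> J ` S0"
      then show "v \<bullet> y = 0"
      proof
        assume "v \<in> S0"
        then obtain n e where "e \<in> orthogonal_comp N" "v = (T ^^ n) e" by (auto simp: S0_def)
        then show ?thesis using key by simp
      next
        assume "v \<in> J ` S0"
        then obtain n e where e: "e \<in> orthogonal_comp N" "Ts e = 0" "v = J ((T ^^ n) e)" by (auto simp: S0_def)
        have "Ts (J e) = 0" using e(2) by (simp add: Ts_J)
        then have "J e \<in> orthogonal_comp N" by (rule ker_in_K)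
        moreover have "v = (T ^^ n) (J e)" using e(3) by (simp add: Tpow_J)
        ultimately show ?thesis using key by simp
      qed
    qed
  qed
next
  show "orthogonal_comp (S0 \<union> J ` S0) \<subseteq> N"
  proof
    fix x assume x: "x \<in> orthogonal_comp (S0 \<union> J ` S0)"
    have h: "(T ^^ k) e \<bullet> x = 0" if "Ts e = 0" for e k
    proof -
      have "e \<in> orthogonal_comp N" by (rule ker_in_K[OF that])
      then have "(T ^^ k) e \<in> S0" using that by (auto simp: S0_def)
      then show ?thesis using x by (auto simp: orthogonal_comp_def orthogonal_def)
    qed
    have rep: "(A ^^ n) ((Ts ^^ n) x) = x" for n
    proof (induction n)
      case 0 then show ?case by simp
    next
      case (Suc n)
      have e1: "(Ts ^^ Suc n) x = Ts ((Ts ^^ n) x)" by (simp only: funpow.simps(2) o_apply)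
      have e2: "(A ^^ Suc n) v = (A ^^ n) (A v)" for v by (simp only: funpow_Suc_right o_apply)
      have "(A ^^ Suc n) ((Ts ^^ Suc n) x) = (A ^^ n) (P ((Ts ^^ n) x))"
        by (simp only: e1 e2 P_def)
      also have "\<dots> = (A ^^ n) ((Ts ^^ n) x)" by (simp only: Pfix[OF h])
      finally show ?case using Suc by simp
    qed
    show "x \<in> N" unfolding N_def
    proof
      fix n
      have "x = (A ^^ n) ((Ts ^^ n) x)" by (rule rep[symmetric])
      then show "x \<in> range (A ^^ n)" by (metis rangeI)
    qed
  qed
qed

end

theorem theorem1p2:
  fixes J T :: "'a::{real_inner, complete_space} \<Rightarrow> 'a"
  assumes "complex_structure J"
    and "weakly_concave J T"
  defines "Hu \<equiv> (\<Inter>n. range (T ^^ n))"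
    and "Hu' \<equiv> (\<Inter>n. range (cauchy_dual T ^^ n))"
  shows "Hu' \<subseteq> Hu \<and> reduces J Hu' T \<and> unitary_on Hu' T \<and>
         wandering_subspace_property J (orthogonal_comp Hu') T (adjoint T)"
proof -
  interpret wc J T by unfold_locales (fact assms(1), fact assms(2))
  have HN: "Hu' = N" by (simp add: Hu'_def N_def)
  have a: "Hu' \<subseteq> Hu" unfolding HN Hu_def by (rule N_sub_Hu)
  have TN: "T ` N \<subseteq> N" using N_T_in by blast
  have TsN: "adjoint T ` N \<subseteq> N" using N_Ts by blast
  have b: "reduces J Hu' T" unfolding HN reduces_def using N_csub N_closed TN TsN by blast
  have c: "unitary_on Hu' T" unfolding HN unitary_on_def using TN TsN N_TsT N_TTs by blast
  define S0 where "S0 = (\<Union>n. (T ^^ n) ` {x \<in> orthogonal_comp N. adjoint T x = 0})"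
  have "orthogonal_comp N = orthogonal_comp (orthogonal_comp (S0 \<union> J ` S0))"
    using N_orth unfolding S0_def by simp
  also have "\<dots> = closure (span (S0 \<union> J ` S0))" by (rule orth_orth)
  also have "\<dots> = closure (cspan J S0)" by (simp add: cspan_def)
  finally have d: "wandering_subspace_property J (orthogonal_comp Hu') T (adjoint T)"
    unfolding HN wandering_subspace_property_def S0_def .
  show ?thesis using a b c d by blast
qed


end
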